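(* Consider the Bradley–Terry–Luce model described in the context, with $\theta^*\in\Theta(\kappa)$, and suppose $\kappa=\mathcal{O}(1)$ and $np\gg\log n$. Let $\hat\theta$ be the MLE and $\delta_i=\hat\theta_i-\theta_i^*-b_i/d_i$, where $b_i=\sum_{j\ne i}A_{ij}(\bar y_{ij}-\psi(\theta_i^*-\theta_j^* ))$ and $d_i=\sum_{j\neq i}A_{ij}\psi'(\theta_i^*-\theta_j^* )$. Then with probability at least $1-\mathcal{O}(n^{-10})$, $$\Big|\frac1n\sum_{i=1}^n\delta_i\Big|\lesssim\frac{1}{\sqrt{npL}}\sqrt{\frac{\log n}{n}}=\mathfrak{o}\Big(\frac{1}{\sqrt{npL}}\Big).$$
   Context: Let $n\ge2$, $\psi(t)=e^t/(1+e^t)$, $\psi'(t)=e^t/(1+e^t)^2$. For $\kappa>0$ let $\Theta(\kappa)=\{\theta\in\mathbb{R}^n:\max_i\theta_i-\min_i\theta_i\le\kappa,\ \sum_{i}\theta_i=0\}$. BTL model: given $\theta^*\in\Theta(\kappa)$, $p\in(0,1]$ and a positive integer $L$, the $\{A_{ij}\}_{i<j}$ are i.i.d. Bernoulli$(p)$, $A_{ji}=A_{ij}$, $A_{ii}=0$; for each $i<j$ with $A_{ij}=1$ one observes $y_{ij\ell}$, $\ell=1,\dots,L$, i.i.d. Bernoulli$(\psi(\theta_i^*-\theta_j^* ))$, independent across pairs and of $A$. Put $\bar y_{ij}=L^{-1}\sum_\ell y_{ij\ell}$, $\bar y_{ji}=1-\bar y_{ij}$ for $i<j$. The MLE is $\hat\theta\in\arg\min_{\mathbf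 1_n^\top\theta=0}\sum_{i<j}A_{ij}\big[\bar y_{ij}\log\frac{1}{\psi(\theta_i-\theta_j)}+\bar y_{ji}\log\frac{1}{\psi(\theta_j-\theta_i)}\big]$. Asymptotics: $n\to\infty$; $p,L,\kappa,\theta^*$ may depend on $n$; $a_n\ll b_n$ means $a_n/b_n\to0$; $\kappa=\mathcal{O}(1)$ means bounded independently of $n$; $a\lesssim b$ means $a\le Cb$ for a constant $C$ independent of $n$ (possibly depending on the bound on $\kappa$); "probability at least $1-\mathcal{O}(n^{-10})$" means at least $1-Cn^{-10}$ with $C$ independent of $n$. *)

theory Defs
  imports "HOL-Probability.Probability"
begin

definition psi :: "real \<Rightarrow> real" where
  "psi t = exp t / (1 + exp t)"

definition psi' :: "real \<Rightarrow> real" where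
  "psi' t = exp t / (1 + exp t)^2"

definition Theta :: "nat \<Rightarrow> real \<Rightarrow> (nat \<Rightarrow> real) set" where
  "Theta n \<kappa> = {\<theta>. (\<forall>i<n. \<forall>j<n. \<theta> i - \<theta> j \<le> \<kappa>) \<and> (\<Sum>i<n. \<theta> i) = 0}"

definition pairs :: "nat \<Rightarrow> (nat \<times> nat) set" where
  "pairs n = {(i, j). i < j \<and> j < n}"

text \<open>An outcome assigns to each pair (i,j), i<j, the edge indicator A_ij and the
  comparison outcomes y_ij1, ..., y_ijL (generated always, used only when A_ij = 1).\<close>
type_synonym outcome = "nat \<times> nat \<Rightarrow> bool \<times> (nat \<Rightarrow> bool)"

definition btl_pmf :: "nat \<Rightarrow> real \<Rightarrow> nat \<Rightarrow> (nat \<Rightarrow> real) \<Rightarrow> outcome pmf" where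
  "btl_pmf n p L \<theta> =
     Pi_pmf (pairs n) (False, \<lambda>_. False)
       (\<lambda>(i, j). pair_pmf (bernoulli_pmf p)
                  (Pi_pmf {..<L} False (\<lambda>_. bernoulli_pmf (psi (\<theta> i - \<theta> j)))))"

definition Aadj :: "outcome \<Rightarrow> nat \<Rightarrow> nat \<Rightarrow> real" where
  "Aadj \<omega> i j = (if i < j then of_bool (fst (\<omega> (i, j)))
                 else if j < i then of_bool (fst (\<omega> (j, i))) else 0)"

definition ybar :: "nat \<Rightarrow> outcome \<Rightarrow> nat \<Rightarrow> nat \<Rightarrow> real" where
  "ybar L \<omega> i j = (if i < j then (\<Sum>l<L. of_bool (snd (\<omega> (i, j)) l)) / real L
                   else 1 - (\<Sum>l<L. of_bool (snd (\<omega> (j, i)) l)) / real L)"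

definition nll :: "nat \<Rightarrow> nat \<Rightarrow> outcome \<Rightarrow> (nat \<Rightarrow> real) \<Rightarrow> real" where
  "nll n L \<omega> \<theta> = (\<Sum>(i, j)\<in>pairs n. Aadj \<omega> i j *
      (ybar L \<omega> i j * ln (1 / psi (\<theta> i - \<theta> j)) + ybar L \<omega> j i * ln (1 / psi (\<theta> j - \<theta> i))))"

definition mle_set :: "nat \<Rightarrow> nat \<Rightarrow> outcome \<Rightarrow> (nat \<Rightarrow> real) set" where
  "mle_set n L \<omega> = {\<theta>. (\<Sum>i<n. \<theta> i) = 0 \<and>
      (\<forall>\<theta>'. (\<Sum>i<n. \<theta>' i) = 0 \<longrightarrow> nll n L \<omega> \<theta> \<le> nll n L \<omega> \<theta>')}"

definition bcoef :: "nat \<Rightarrow> nat \<Rightarrow> outcome \<Rightarrow> (nat \<Rightarrow> real) \<Rightarrow> nat \<Rightarrow> real" where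
  "bcoef n L \<omega> \<theta>s i = (\<Sum>j\<in>{..<n} - {i}. Aadj \<omega> i j * (ybar L \<omega> i j - psi (\<theta>s i - \<theta>s j)))"

definition dcoef :: "nat \<Rightarrow> outcome \<Rightarrow> (nat \<Rightarrow> real) \<Rightarrow> nat \<Rightarrow> real" where
  "dcoef n \<omega> \<theta>s i = (\<Sum>j\<in>{..<n} - {i}. Aadj \<omega> i j * psi' (\<theta>s i - \<theta>s j))"

definition delta :: "nat \<Rightarrow> nat \<Rightarrow> outcome \<Rightarrow> (nat \<Rightarrow> real) \<Rightarrow> (nat \<Rightarrow> real) \<Rightarrow> nat \<Rightarrow> real" where
  "delta n L \<omega> \<theta>s \<theta>h i = \<theta>h i - \<theta>s i - bcoef n L \<omega> \<theta>s i / dcoef n \<omega> \<theta>s i"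

end

theory Submission
  imports Defs
begin

lemma psi_pos: "0 < psi x" and psi_lt1: "psi x < 1"
  unfolding psi_def by (auto simp: divide_simps add_pos_pos)

lemma ln_inv_psi: "ln (1 / psi x) = ln (1 + exp (- x))"
proof -
  have "1 / psi x = 1 + exp (-x)"
    unfolding psi_def by (simp add: field_simps exp_minus add_pos_pos)
  thus ?thesis by simp
qed

lemma ln_inv_psi_ge: "ln (1 / psi x) \<ge> - x" and ln_inv_psi_nonneg: "ln (1 / psi x) \<ge> 0"
proof -
  have p: "0 < 1 + exp (-x)" by (smt (verit) exp_gt_zero)
  have "ln (exp (-x)) \<le> ln (1 + exp (-x))" using p by (subst ln_le_cancel_iff) auto
  thus "ln (1 / psi x) \<ge> - x" by (simp add: ln_inv_psi)
  show "ln (1 / psi x) \<ge> 0" using p by (simp add: ln_inv_psi)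
qed

lemma ybar_bounds:
  assumes "L \<ge> 1" shows "0 \<le> ybar L \<omega> i j" "ybar L \<omega> i j \<le> 1"
proof -
  have s: "(\<Sum>l<L. of_bool (snd (\<omega> q) l) :: real) \<le> real L" for q
    using sum_bounded_above[of "{..<L}" "\<lambda>l. of_bool (snd (\<omega> q) l) :: real" 1] by auto
  have s0: "(\<Sum>l<L. of_bool (snd (\<omega> q) l) :: real) \<ge> 0" for q by (intro sum_nonneg) auto
  from assms have L: "real L > 0" by auto
  show "0 \<le> ybar L \<omega> i j" "ybar L \<omega> i j \<le> 1"
    unfolding ybar_def using s[of "(i,j)"] s[of "(j,i)"] s0[of "(i,j)"] s0[of "(j,i)"] L
    by (auto simp: field_simps)
qed

lemma Aadj_sym: "Aadj \<omega> i j = Aadj \<omega> j i"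
  unfolding Aadj_def by auto

lemma Aadj_01: "Aadj \<omega> i j = 0 \<or> Aadj \<omega> i j = 1"
  unfolding Aadj_def by auto

lemma Aadj_nonneg: "Aadj \<omega> i j \<ge> 0"
  using Aadj_01[of \<omega> i j] by auto

definition nterm :: "nat \<Rightarrow> outcome \<Rightarrow> (nat \<Rightarrow> real) \<Rightarrow> nat \<Rightarrow> nat \<Rightarrow> real" where
  "nterm L \<omega> \<theta> i j = Aadj \<omega> i j *
      (ybar L \<omega> i j * ln (1 / psi (\<theta> i - \<theta> j)) + ybar L \<omega> j i * ln (1 / psi (\<theta> j - \<theta> i)))"

lemma nll_nterm: "nll n L \<omega> \<theta> = (\<Sum>(i, j)\<in>pairs n. nterm L \<omega> \<theta> i j)"
  unfolding nll_def nterm_def by simp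

lemma nterm_sym: "nterm L \<omega> \<theta> i j = nterm L \<omega> \<theta> j i"
  unfolding nterm_def by (simp add: Aadj_sym[of \<omega> i j] algebra_simps)

lemma nterm_nonneg: "L \<ge> 1 \<Longrightarrow> nterm L \<omega> \<theta> i j \<ge> 0"
  unfolding nterm_def
  by (intro mult_nonneg_nonneg add_nonneg_nonneg Aadj_nonneg ybar_bounds ln_inv_psi_nonneg)

lemma finite_pairs: "finite (pairs n)"
proof -
  have "pairs n \<subseteq> {..<n} \<times> {..<n}" unfolding pairs_def by auto
  thus ?thesis by (rule finite_subset) auto
qed

lemma nll_nonneg: "L \<ge> 1 \<Longrightarrow> nll n L \<omega> \<theta> \<ge> 0"
  unfolding nll_nterm by (intro sum_nonneg) (auto intro: nterm_nonneg)

lemma nterm_le_nll: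
  assumes "L \<ge> 1" "u < n" "v < n" "u \<noteq> v"
  shows "nterm L \<omega> \<theta> u v \<le> nll n L \<omega> \<theta>"
proof -
  define q where "q = (min u v, max u v)"
  have q: "q \<in> pairs n" using assms unfolding q_def pairs_def by auto
  have "nterm L \<omega> \<theta> u v = (\<lambda>(i, j). nterm L \<omega> \<theta> i j) q"
    unfolding q_def by (cases "u < v") (auto simp: min_def max_def nterm_sym)
  also have "\<dots> \<le> (\<Sum>(i, j)\<in>pairs n. nterm L \<omega> \<theta> i j)"
    by (rule member_le_sum[OF q]) (auto intro: nterm_nonneg[OF assms(1)] simp: finite_pairs)
  finally show ?thesis by (simp add: nll_nterm)
qed

definition beats :: "nat \<Rightarrow> outcome \<Rightarrow> nat \<Rightarrow> nat \<Rightarrow> bool" where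
  "beats L \<omega> u v \<longleftrightarrow> Aadj \<omega> u v = 1 \<and> ybar L \<omega> u v \<ge> 1 / real L"

definition conn :: "nat \<Rightarrow> nat \<Rightarrow> outcome \<Rightarrow> bool" where
  "conn n L \<omega> \<longleftrightarrow> (\<forall>S. S \<subseteq> {..<n} \<longrightarrow> S \<noteq> {} \<longrightarrow> S \<noteq> {..<n} \<longrightarrow>
      (\<exists>u\<in>{..<n} - S. \<exists>v\<in>S. beats L \<omega> u v))"

lemma beats_bound:
  assumes "L \<ge> 1" "beats L \<omega> u v"
  shows "(\<theta> v - \<theta> u) / real L \<le> nterm L \<omega> \<theta> u v"
proof -
  have A: "Aadj \<omega> u v = 1" and y: "ybar L \<omega> u v \<ge> 1 / real L"
    using assms unfolding beats_def by auto
  have l1: "ln (1 / psi (\<theta> u - \<theta> v)) \<ge> \<theta> v - \<theta> u" using ln_inv_psi_ge[of "\<theta> u - \<theta> v"] by simp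
  have l0: "ln (1 / psi (\<theta> u - \<theta> v)) \<ge> 0" by (rule ln_inv_psi_nonneg)
  have "(\<theta> v - \<theta> u) / real L \<le> (1 / real L) * ln (1 / psi (\<theta> u - \<theta> v))"
    using l1 assms(1) by (simp add: divide_right_mono)
  also have "\<dots> \<le> ybar L \<omega> u v * ln (1 / psi (\<theta> u - \<theta> v))"
    by (rule mult_right_mono[OF y l0])
  also have "\<dots> \<le> ybar L \<omega> u v * ln (1 / psi (\<theta> u - \<theta> v)) + ybar L \<omega> v u * ln (1 / psi (\<theta> v - \<theta> u))"
    using ybar_bounds[OF assms(1), of \<omega> v u] ln_inv_psi_nonneg[of "\<theta> v - \<theta> u"] by simp
  also have "\<dots> = nterm L \<omega> \<theta> u v" unfolding nterm_def A by simp
  finally show ?thesis .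
qed

lemma spread:
  assumes L: "L \<ge> 1" and c: "conn n L \<omega>" and a: "a < n" and b: "b < n"
  shows "\<theta> a - \<theta> b \<le> real n * (real L * nll n L \<omega> \<theta> + 1)"
proof (rule ccontr)
  define D where "D = real L * nll n L \<omega> \<theta> + 1"
  have D: "D > 0" unfolding D_def using nll_nonneg[OF L, of n \<omega> \<theta>] L by (intro add_nonneg_pos mult_nonneg_nonneg) auto
  assume "\<not> ?thesis"
  hence big: "\<theta> a - \<theta> b > real n * D" unfolding D_def by simp
  have n0: "real n * D > 0" using a D by simp
  have ab: "a \<noteq> b" using big n0 by auto
  define K where "K = {k. k < n \<and> (\<exists>r<n. \<theta> b + real k * D < \<theta> r \<and> \<theta> r \<le> \<theta> b + (real k + 1) * D)}"
  define g where "g r = nat (ceiling ((\<theta> r - \<theta> b) / D)) - 1" for r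
  have Ksub: "K \<subseteq> g ` ({..<n} - {a, b})"
  proof
    fix k assume "k \<in> K"
    then obtain r where k: "k < n" and r: "r < n" and r1: "\<theta> b + real k * D < \<theta> r"
      and r2: "\<theta> r \<le> \<theta> b + (real k + 1) * D" unfolding K_def by auto
    have "real k * D \<ge> 0" using D by simp
    hence "r \<noteq> b" using r1 by auto
    moreover have "r \<noteq> a"
    proof
      assume "r = a"
      have "(real k + 1) * D \<le> real n * D" using k D by (intro mult_right_mono) auto
      thus False using r2 big \<open>r = a\<close> by simp
    qed
    moreover have "g r = k"
    proof -
      have "real k < (\<theta> r - \<theta> b) / D" using r1 D by (simp add: field_simps)
      moreover have "(\<theta> r - \<theta> b) / D \<le> real k + 1" using r2 D by (simp add: field_simps)
      ultimately have "ceiling ((\<theta> r - \<theta> b) / D) = int k + 1"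
        by (subst ceiling_eq_iff) auto
      thus ?thesis unfolding g_def by simp
    qed
    ultimately show "k \<in> g ` ({..<n} - {a, b})" using r by auto
  qed
  have "card K \<le> card ({..<n} - {a, b})"
    using card_mono[OF _ Ksub] card_image_le[of "{..<n} - {a, b}" g] by force
  also have "\<dots> = n - 2" using a b ab by (simp add: card_Diff_subset)
  finally have "card K < n" using a by linarith
  hence "\<not> {..<n} \<subseteq> K" using card_mono[of K "{..<n}"] K_def by auto
  then obtain k where k: "k < n" "k \<notin> K" by auto
  define t where "t = \<theta> b + real k * D"
  define S where "S = {r \<in> {..<n}. \<theta> r > t}"
  have "real k * D \<le> real n * D" using k D by (intro mult_right_mono) auto
  hence aS: "a \<in> S" using big a unfolding S_def t_def by simp
  have "real k * D \<ge> 0" using D by simp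
  hence bS: "b \<notin> S" unfolding S_def t_def by auto
  have "S \<subseteq> {..<n}" "S \<noteq> {}" "S \<noteq> {..<n}" using aS bS b unfolding S_def by auto
  then obtain u v where u: "u \<in> {..<n} - S" and v: "v \<in> S" and bt: "beats L \<omega> u v"
    using c unfolding conn_def by blast
  have tu: "\<theta> u \<le> t" using u unfolding S_def by auto
  have tv: "\<theta> v > t + D"
  proof (rule ccontr)
    assume "\<not> ?thesis"
    hence "k \<in> K" using v k unfolding K_def S_def t_def by (auto simp: algebra_simps)
    thus False using k by simp
  qed
  have "D / real L < (\<theta> v - \<theta> u) / real L" using tu tv L by (intro divide_strict_right_mono) auto
  also have "\<dots> \<le> nterm L \<omega> \<theta> u v" by (rule beats_bound[OF L bt])
  also have "\<dots> \<le> nll n L \<omega> \<theta>" using u v unfolding S_def by (intro nterm_le_nll[OF L]) auto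
  finally show False using L unfolding D_def by (simp add: field_simps)
qed

lemma bounded_coord:
  assumes L: "L \<ge> 1" and c: "conn n L \<omega>" and s: "(\<Sum>i<n. \<theta> i) = 0" and i: "i < n"
  shows "\<bar>\<theta> i\<bar> \<le> real n * (real L * nll n L \<omega> \<theta> + 1)"
proof -
  define R where "R = real n * (real L * nll n L \<omega> \<theta> + 1)"
  have sp: "\<bar>\<theta> i - \<theta> j\<bar> \<le> R" if "j < n" for j
    using spread[OF L c i that, of \<theta>] spread[OF L c that i, of \<theta>] unfolding R_def by auto
  have "real n * \<theta> i = (\<Sum>j<n. \<theta> i - \<theta> j)" using s by (simp add: sum_subtractf)
  hence "\<bar>real n * \<theta> i\<bar> \<le> (\<Sum>j<n. \<bar>\<theta> i - \<theta> j\<bar>)" by (metis sum_abs)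
  also have "\<dots> \<le> (\<Sum>j<n. R)" by (intro sum_mono sp) auto
  finally have "real n * \<bar>\<theta> i\<bar> \<le> real n * R" by (simp add: abs_mult)
  thus ?thesis using i unfolding R_def by simp
qed

lemma cont_coord: "continuous_on S (\<lambda>x::nat \<Rightarrow> real. x i)"
  by (rule continuous_on_subset[OF continuous_on_product_coordinates]) simp

lemma nll_cont: "continuous_on UNIV (\<lambda>\<theta>. nll n L \<omega> \<theta>)"
proof -
  have pos: "1 + exp y \<noteq> (0::real)" for y by (smt (verit) exp_gt_zero)
  have t: "continuous_on UNIV (\<lambda>\<theta>::nat\<Rightarrow>real. ln (1 + exp (- (\<theta> i - \<theta> j))))" for i j
    by (intro continuous_on_ln continuous_on_add continuous_on_const continuous_on_exp
      continuous_on_minus continuous_on_diff cont_coord) (use pos in auto)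
  show ?thesis
    unfolding nll_def ln_inv_psi case_prod_unfold
    by (intro continuous_on_sum continuous_on_mult continuous_on_add continuous_on_const t)
qed

lemma nll_restrict: "nll n L \<omega> (\<lambda>i. if i < n then \<theta> i else 0) = nll n L \<omega> \<theta>"
  unfolding nll_def by (intro sum.cong) (auto simp: pairs_def)

lemma mle_exists:
  assumes L: "L \<ge> 1" and c: "conn n L \<omega>"
  shows "mle_set n L \<omega> \<noteq> {}"
proof -
  define R where "R = real n * (real L * nll n L \<omega> (\<lambda>_. 0) + 1)"
  define B :: "(nat \<Rightarrow> real) set" where "B = PiE UNIV (\<lambda>i. if i < n then {-R..R} else {0})"
  define F where "F = B \<inter> {\<theta>. (\<Sum>i<n. \<theta> i) = 0}"
  have "compactin (product_topology (\<lambda>i. euclidean) UNIV) B"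
    unfolding B_def compactin_PiE by auto
  hence cB: "compact B" unfolding euclidean_product_topology by simp
  have "closed {\<theta>::nat\<Rightarrow>real. (\<Sum>i<n. \<theta> i) = 0}"
    by (intro closed_Collect_eq continuous_intros cont_coord)
  hence cF: "compact F" unfolding F_def using cB by (intro compact_Int_closed) auto
  have R0: "R \<ge> 0" unfolding R_def using nll_nonneg[OF L, of n \<omega> "\<lambda>_. 0"] by simp
  have zF: "(\<lambda>_. 0) \<in> F" unfolding F_def B_def using R0 by auto
  obtain \<theta>m where m: "\<theta>m \<in> F" and mmin: "\<And>y. y \<in> F \<Longrightarrow> nll n L \<omega> \<theta>m \<le> nll n L \<omega> y"
    using continuous_attains_inf[OF cF _ continuous_on_subset[OF nll_cont]] zF by blast
  have "\<theta>m \<in> mle_set n L \<omega>"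
    unfolding mle_set_def
  proof (intro CollectI conjI allI impI)
    show "(\<Sum>i<n. \<theta>m i) = 0" using m unfolding F_def by auto
    fix \<theta>' :: "nat \<Rightarrow> real" assume s: "(\<Sum>i<n. \<theta>' i) = 0"
    show "nll n L \<omega> \<theta>m \<le> nll n L \<omega> \<theta>'"
    proof (cases "nll n L \<omega> \<theta>' \<ge> nll n L \<omega> (\<lambda>_. 0)")
      case True
      thus ?thesis using mmin[OF zF] by simp
    next
      case False
      define \<theta>'' where "\<theta>'' = (\<lambda>i. if i < n then \<theta>' i else 0)"
      have "\<theta>'' \<in> F"
      proof -
        have "\<bar>\<theta>' i\<bar> \<le> R" if "i < n" for i
        proof -
          have "\<bar>\<theta>' i\<bar> \<le> real n * (real L * nll n L \<omega> \<theta>' + 1)"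
            by (rule bounded_coord[OF L c s that])
          also have "\<dots> \<le> R" unfolding R_def using False
            by (intro mult_left_mono add_right_mono) auto
          finally show ?thesis .
        qed
        moreover have "(\<Sum>i<n. \<theta>'' i) = 0" using s unfolding \<theta>''_def by simp
        ultimately show ?thesis unfolding F_def B_def \<theta>''_def by (force simp: abs_le_iff)
      qed
      hence "nll n L \<omega> \<theta>m \<le> nll n L \<omega> \<theta>''" by (rule mmin)
      also have "\<dots> = nll n L \<omega> \<theta>'" unfolding \<theta>''_def by (rule nll_restrict)
      finally show ?thesis .
    qed
  qed
  thus ?thesis by auto
qed

lemma offdiag_sum:
  fixes F :: "nat \<Rightarrow> nat \<Rightarrow> 'a::comm_monoid_add"
  shows "(\<Sum>i<n. \<Sum>j\<in>{..<n} - {i}. F i j) = (\<Sum>(i, j)\<in>pairs n. F i j + F j i)"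
proof -
  have "(\<Sum>i<n. \<Sum>j\<in>{..<n} - {i}. F i j) = (\<Sum>x\<in>Sigma {..<n} (\<lambda>i. {..<n} - {i}). F (fst x) (snd x))"
    by (subst sum.Sigma) (auto simp: case_prod_unfold)
  also have "Sigma {..<n} (\<lambda>i. {..<n} - {i}) = pairs n \<union> prod.swap ` pairs n"
    unfolding pairs_def by (auto simp: image_iff)
  also have "(\<Sum>x\<in>pairs n \<union> prod.swap ` pairs n. F (fst x) (snd x)) =
      (\<Sum>x\<in>pairs n. F (fst x) (snd x)) + (\<Sum>x\<in>prod.swap ` pairs n. F (fst x) (snd x))"
    by (intro sum.union_disjoint) (auto simp: finite_pairs, auto simp: pairs_def)
  also have "(\<Sum>x\<in>prod.swap ` pairs n. F (fst x) (snd x)) = (\<Sum>x\<in>pairs n. F (snd x) (fst x))"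
    by (subst sum.reindex) (auto intro: inj_onI)
  also have "(\<Sum>x\<in>pairs n. F (fst x) (snd x)) + (\<Sum>x\<in>pairs n. F (snd x) (fst x)) =
     (\<Sum>x\<in>pairs n. F (fst x) (snd x) + F (snd x) (fst x))"
    by (rule sum.distrib[symmetric])
  also have "\<dots> = (\<Sum>(i, j)\<in>pairs n. F i j + F j i)"
    by (intro sum.cong) auto
  finally show ?thesis .
qed

lemma psi_neg: "psi (- x) = 1 - psi x"
proof -
  have p: "1 + exp x > 0" by (smt (verit) exp_gt_zero)
  have "psi (- x) = 1 / (1 + exp x)"
    unfolding psi_def exp_minus using p by (simp add: field_simps)
  also have "\<dots> = 1 - psi x" unfolding psi_def using p by (simp add: field_simps)
  finally show ?thesis .
qed

lemma ybar_swap: "i < j \<Longrightarrow> ybar L \<omega> j i = 1 - ybar L \<omega> i j"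
  unfolding ybar_def by auto

definition Ssum :: "nat \<Rightarrow> nat \<Rightarrow> outcome \<Rightarrow> (nat \<Rightarrow> real) \<Rightarrow> real" where
  "Ssum n L \<omega> \<theta>s = (\<Sum>(i, j)\<in>pairs n. Aadj \<omega> i j * (ybar L \<omega> i j - psi (\<theta>s i - \<theta>s j)) *
       (1 / dcoef n \<omega> \<theta>s i - 1 / dcoef n \<omega> \<theta>s j))"

lemma sum_b_over_d:
  "(\<Sum>i<n. bcoef n L \<omega> \<theta>s i / dcoef n \<omega> \<theta>s i) = Ssum n L \<omega> \<theta>s"
proof -
  define F where "F i j = Aadj \<omega> i j * (ybar L \<omega> i j - psi (\<theta>s i - \<theta>s j)) / dcoef n \<omega> \<theta>s i" for i j
  have "(\<Sum>i<n. bcoef n L \<omega> \<theta>s i / dcoef n \<omega> \<theta>s i) = (\<Sum>i<n. \<Sum>j\<in>{..<n} - {i}. F i j)"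
    unfolding bcoef_def F_def by (simp add: sum_divide_distrib)
  also have "\<dots> = (\<Sum>(i, j)\<in>pairs n. F i j + F j i)" by (rule offdiag_sum)
  also have "\<dots> = Ssum n L \<omega> \<theta>s"
    unfolding Ssum_def
  proof (intro sum.cong refl, clarify)
    fix i j assume "(i, j) \<in> pairs n"
    hence ij: "i < j" unfolding pairs_def by auto
    have ps: "psi (\<theta>s j - \<theta>s i) = 1 - psi (\<theta>s i - \<theta>s j)"
      using psi_neg[of "\<theta>s i - \<theta>s j"] by simp
    show "F i j + F j i = Aadj \<omega> i j * (ybar L \<omega> i j - psi (\<theta>s i - \<theta>s j)) *
       (1 / dcoef n \<omega> \<theta>s i - 1 / dcoef n \<omega> \<theta>s j)"
      unfolding F_def ybar_swap[OF ij, of L \<omega>] Aadj_sym[of \<omega> j i] ps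
      by (simp add: divide_inverse algebra_simps)
  qed
  finally show ?thesis .
qed

lemma sum_delta:
  assumes "\<theta>h \<in> mle_set n L \<omega>" "(\<Sum>i<n. \<theta>s i) = 0"
  shows "(\<Sum>i<n. delta n L \<omega> \<theta>s \<theta>h i) = - Ssum n L \<omega> \<theta>s"
proof -
  have h: "(\<Sum>i<n. \<theta>h i) = 0" using assms(1) unfolding mle_set_def by auto
  show ?thesis
    unfolding delta_def sum_b_over_d[symmetric] sum_subtractf h assms(2)
    by simp
qed

lemma finite_set_pmf_bern: "finite (set_pmf (bernoulli_pmf r))"
  by (rule finite_subset[of _ UNIV]) auto

lemma finite_set_Pi_pmf:
  assumes "finite A" "\<And>x. x \<in> A \<Longrightarrow> finite (set_pmf (p x))"
  shows "finite (set_pmf (Pi_pmf A d p))"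
  using assms by (subst set_Pi_pmf) (auto intro!: finite_PiE_dflt)

lemma integrable_fin: "finite (set_pmf M) \<Longrightarrow> integrable (measure_pmf M) (f :: _ \<Rightarrow> real)"
  by (rule integrable_measure_pmf_finite)

lemma exp_bern1: "0 \<le> r \<Longrightarrow> r \<le> 1 \<Longrightarrow> measure_pmf.expectation (bernoulli_pmf r) (\<lambda>b. of_bool b :: real) = r"
  by simp
lemma exp_bern2: "0 \<le> r \<Longrightarrow> r \<le> 1 \<Longrightarrow> measure_pmf.expectation (bernoulli_pmf r) (\<lambda>b. - of_bool b :: real) = - r"
  by simp

lemma bern_mgf_pos:
  fixes f :: "bool \<Rightarrow> real"
  assumes r: "0 \<le> r" "r \<le> 1" and t: "t > 0" and ab: "\<And>x. f x \<in> {a..b}"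
  shows "measure_pmf.expectation (bernoulli_pmf r) (\<lambda>x. exp (t * (f x - measure_pmf.expectation (bernoulli_pmf r) f)))
      \<le> exp (t\<^sup>2 * (b - a)\<^sup>2 / 8)"
proof -
  have I: "interval_bounded_random_variable (measure_pmf (bernoulli_pmf r)) f a b"
    by (intro interval_bounded_random_variable.intro interval_bounded_random_variable_axioms.intro
        measure_pmf.prob_space_axioms AE_pmfI) (use ab in auto)
  have "nn_integral (bernoulli_pmf r) (\<lambda>x. ennreal (exp (t * (f x - measure_pmf.expectation (bernoulli_pmf r) f))))
      \<le> ennreal (exp (t\<^sup>2 * (b - a)\<^sup>2 / 8))"
    by (rule interval_bounded_random_variable.Hoeffdings_lemma_nn_integral[OF I t])
  moreover have "nn_integral (bernoulli_pmf r) (\<lambda>x. ennreal (exp (t * (f x - measure_pmf.expectation (bernoulli_pmf r) f)))) =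
      ennreal (measure_pmf.expectation (bernoulli_pmf r) (\<lambda>x. exp (t * (f x - measure_pmf.expectation (bernoulli_pmf r) f))))"
    by (intro nn_integral_eq_integral integrable_fin finite_set_pmf_bern) auto
  ultimately show ?thesis by simp
qed

lemma bern_mgf:
  assumes r: "0 \<le> r" "r \<le> 1"
  shows "measure_pmf.expectation (bernoulli_pmf r) (\<lambda>b. exp (t * (of_bool b - r))) \<le> exp (t\<^sup>2 / 8)"
proof (cases "t > 0")
  case True thus ?thesis using bern_mgf_pos[OF r True, of "\<lambda>b. of_bool b" 0 1] r by simp
next
  case False
  show ?thesis
  proof (cases "t = 0")
    case True thus ?thesis by simp
  next
    case False
    with \<open>\<not> t > 0\<close> have t: "- t > 0" by simp
    from bern_mgf_pos[OF r t, of "\<lambda>b. - of_bool b" "-1" 0] r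
    show ?thesis by (simp add: algebra_simps)
  qed
qed

lemma ybar_mgf:
  assumes r: "0 \<le> r" "r \<le> 1" and L: "L \<ge> 1"
  shows "measure_pmf.expectation (Pi_pmf {..<L} False (\<lambda>_. bernoulli_pmf r))
     (\<lambda>y. exp (s * ((\<Sum>l<L. of_bool (y l)) / real L - r))) \<le> exp (s\<^sup>2 / (8 * real L))"
proof -
  have eq: "exp (s * ((\<Sum>l<L. of_bool (y l)) / real L - r)) = (\<Prod>l<L. exp ((s / real L) * (of_bool (y l) - r)))" for y :: "nat \<Rightarrow> bool"
  proof -
    have "(\<Sum>l<L. (s / real L) * (of_bool (y l) - r)) = (s / real L) * (\<Sum>l<L. (of_bool (y l) - r))"
      by (rule sum_distrib_left[symmetric])
    also have "(\<Sum>l<L. (of_bool (y l) - r)) = (\<Sum>l<L. of_bool (y l)) - real L * r"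
      unfolding sum_subtractf by simp
    finally have "(\<Sum>l<L. (s / real L) * (of_bool (y l) - r)) = (s / real L) * ((\<Sum>l<L. of_bool (y l)) - real L * r)" .
    also have "\<dots> = s * ((\<Sum>l<L. of_bool (y l)) / real L - r)"
      using L by (simp add: field_simps)
    finally have "s * ((\<Sum>l<L. of_bool (y l)) / real L - r) = (\<Sum>l<L. (s / real L) * (of_bool (y l) - r))" by simp
    thus ?thesis by (simp add: exp_sum)
  qed
  have "measure_pmf.expectation (Pi_pmf {..<L} False (\<lambda>_. bernoulli_pmf r))
     (\<lambda>y. exp (s * ((\<Sum>l<L. of_bool (y l)) / real L - r))) =
     (\<Prod>l<L. measure_pmf.expectation (bernoulli_pmf r) (\<lambda>b. exp ((s / real L) * (of_bool b - r))))"
    unfolding eq by (intro expectation_prod_Pi_pmf integrable_fin finite_set_pmf_bern) auto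
  also have "\<dots> \<le> (\<Prod>l<L. exp ((s / real L)\<^sup>2 / 8))"
    by (intro prod_mono conjI bern_mgf r integral_nonneg_AE AE_pmfI) auto
  also have "\<dots> = exp (s\<^sup>2 / (8 * real L))"
    using L by (simp add: exp_of_nat_mult[symmetric] power2_eq_square field_simps)
  finally show ?thesis .
qed

definition Yq :: "nat \<Rightarrow> (nat \<Rightarrow> real) \<Rightarrow> nat \<times> nat \<Rightarrow> (nat \<Rightarrow> bool) pmf" where
  "Yq L \<theta> q = Pi_pmf {..<L} False (\<lambda>_. bernoulli_pmf (psi (\<theta> (fst q) - \<theta> (snd q))))"

definition PA :: "nat \<Rightarrow> real \<Rightarrow> (nat \<times> nat \<Rightarrow> bool) pmf" where
  "PA n p = Pi_pmf (pairs n) False (\<lambda>_. bernoulli_pmf p)"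

definition Qa :: "nat \<Rightarrow> nat \<Rightarrow> (nat \<Rightarrow> real) \<Rightarrow> (nat \<times> nat \<Rightarrow> bool) \<Rightarrow> outcome pmf" where
  "Qa n L \<theta> a = Pi_pmf (pairs n) (False, \<lambda>_. False) (\<lambda>q. map_pmf (\<lambda>y. (a q, y)) (Yq L \<theta> q))"

definition ybq :: "nat \<Rightarrow> (nat \<Rightarrow> bool) \<Rightarrow> real" where
  "ybq L y = (\<Sum>l<L. of_bool (y l)) / real L"

definition hq :: "nat \<Rightarrow> (nat \<Rightarrow> real) \<Rightarrow> (nat \<times> nat \<Rightarrow> real) \<Rightarrow> nat \<times> nat \<Rightarrow> bool \<times> (nat \<Rightarrow> bool) \<Rightarrow> real" where
  "hq L \<theta> c q ey = of_bool (fst ey) * c q * (ybq L (snd ey) - psi (\<theta> (fst q) - \<theta> (snd q)))"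

lemma finite_pairs': "finite (pairs n)"
proof -
  have "pairs n \<subseteq> {..<n} \<times> {..<n}" unfolding pairs_def by auto
  thus ?thesis by (rule finite_subset) auto
qed

lemma btl_bind: "btl_pmf n p L \<theta> = bind_pmf (PA n p) (Qa n L \<theta>)"
proof -
  have "btl_pmf n p L \<theta> = Pi_pmf (pairs n) (False, \<lambda>_. False)
      (\<lambda>q. bind_pmf (bernoulli_pmf p) (\<lambda>e. map_pmf (\<lambda>y. (e, y)) (Yq L \<theta> q)))"
    unfolding btl_pmf_def Yq_def pair_pmf_def map_pmf_def case_prod_unfold by simp
  also have "\<dots> = bind_pmf (PA n p) (Qa n L \<theta>)"
    unfolding PA_def Qa_def by (rule Pi_pmf_bind[OF finite_pairs'])
  finally show ?thesis .
qed

lemma finite_Yq: "finite (set_pmf (Yq L \<theta> q))"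
  unfolding Yq_def by (intro finite_set_Pi_pmf finite_set_pmf_bern) auto

lemma finite_Qa: "finite (set_pmf (Qa n L \<theta> a))"
  unfolding Qa_def by (intro finite_set_Pi_pmf finite_pairs') (auto simp: finite_Yq)

lemma finite_PA: "finite (set_pmf (PA n p))"
  unfolding PA_def by (intro finite_set_Pi_pmf finite_pairs' finite_set_pmf_bern)

lemma psi_01: "0 \<le> psi x" "psi x \<le> 1"
  unfolding psi_def by (auto simp: divide_simps add_pos_pos)

lemma inner_mgf:
  assumes L: "L \<ge> 1"
  shows "measure_pmf.expectation (Qa n L \<theta> a) (\<lambda>\<omega>. exp (s * (\<Sum>q\<in>pairs n. hq L \<theta> c q (\<omega> q))))
     \<le> exp (s\<^sup>2 * (\<Sum>q\<in>pairs n. of_bool (a q) * (c q)\<^sup>2) / (8 * real L))"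
proof -
  have eq: "exp (s * (\<Sum>q\<in>pairs n. hq L \<theta> c q (\<omega> q))) = (\<Prod>q\<in>pairs n. exp (s * hq L \<theta> c q (\<omega> q)))" for \<omega> :: outcome
    by (simp add: sum_distrib_left exp_sum finite_pairs')
  have "measure_pmf.expectation (Qa n L \<theta> a) (\<lambda>\<omega>. exp (s * (\<Sum>q\<in>pairs n. hq L \<theta> c q (\<omega> q)))) =
      (\<Prod>q\<in>pairs n. measure_pmf.expectation (map_pmf (\<lambda>y. (a q, y)) (Yq L \<theta> q)) (\<lambda>v. exp (s * hq L \<theta> c q v)))"
    unfolding eq Qa_def
    by (intro expectation_prod_Pi_pmf finite_pairs' integrable_fin) (auto simp: finite_Yq)
  also have "\<dots> \<le> (\<Prod>q\<in>pairs n. exp (s\<^sup>2 * (of_bool (a q) * (c q)\<^sup>2) / (8 * real L)))"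
  proof (intro prod_mono conjI)
    fix q assume "q \<in> pairs n"
    show "0 \<le> measure_pmf.expectation (map_pmf (\<lambda>y. (a q, y)) (Yq L \<theta> q)) (\<lambda>v. exp (s * hq L \<theta> c q v))"
      by (intro integral_nonneg_AE AE_pmfI) auto
    show "measure_pmf.expectation (map_pmf (\<lambda>y. (a q, y)) (Yq L \<theta> q)) (\<lambda>v. exp (s * hq L \<theta> c q v))
        \<le> exp (s\<^sup>2 * (of_bool (a q) * (c q)\<^sup>2) / (8 * real L))"
    proof (cases "a q")
      case False
      thus ?thesis by (simp add: hq_def)
    next
      case True
      have "measure_pmf.expectation (map_pmf (\<lambda>y. (a q, y)) (Yq L \<theta> q)) (\<lambda>v. exp (s * hq L \<theta> c q v)) =
          measure_pmf.expectation (Yq L \<theta> q) (\<lambda>y. exp ((s * c q) * ((\<Sum>l<L. of_bool (y l)) / real L - psi (\<theta> (fst q) - \<theta> (snd q)))))"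
        using True by (simp add: hq_def ybq_def mult.assoc)
      also have "\<dots> \<le> exp ((s * c q)\<^sup>2 / (8 * real L))"
        unfolding Yq_def by (intro ybar_mgf psi_01 L)
      finally show ?thesis using True by (simp add: power_mult_distrib)
    qed
  qed
  also have "\<dots> = exp (s\<^sup>2 * (\<Sum>q\<in>pairs n. of_bool (a q) * (c q)\<^sup>2) / (8 * real L))"
  proof -
    have "(\<Prod>q\<in>pairs n. exp (s\<^sup>2 * (of_bool (a q) * (c q)\<^sup>2) / (8 * real L))) =
        exp (\<Sum>q\<in>pairs n. s\<^sup>2 * (of_bool (a q) * (c q)\<^sup>2) / (8 * real L))"
      by (simp add: exp_sum finite_pairs')
    also have "(\<Sum>q\<in>pairs n. s\<^sup>2 * (of_bool (a q) * (c q)\<^sup>2) / (8 * real L)) =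
        s\<^sup>2 * (\<Sum>q\<in>pairs n. of_bool (a q) * (c q)\<^sup>2) / (8 * real L)"
      by (subst sum_divide_distrib[symmetric], subst sum_distrib_left[symmetric], rule refl)
    finally show ?thesis .
  qed
  finally show ?thesis .
qed

lemma pmf_markov_exp:
  fixes X :: "'a \<Rightarrow> real"
  assumes fin: "finite (set_pmf M)" and s: "s > 0"
  shows "measure_pmf.prob M {x. t \<le> X x} \<le> measure_pmf.expectation M (\<lambda>x. exp (s * X x)) / exp (s * t)"
proof -
  have "{x. t \<le> X x} = {x \<in> space (measure_pmf M). exp (s * t) \<le> exp (s * X x)}"
    using s by auto
  hence "measure_pmf.prob M {x. t \<le> X x} = \<P>(x in measure_pmf M. exp (s * t) \<le> exp (s * X x))"
    by simp
  also have "\<dots> \<le> measure_pmf.expectation M (\<lambda>x. exp (s * X x)) / exp (s * t)"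
    by (rule integral_Markov_inequality_measure[where A = UNIV]) (auto intro: integrable_fin[OF fin])
  finally show ?thesis .
qed

lemma inner_tail:
  assumes L: "L \<ge> 1" and W: "(\<Sum>q\<in>pairs n. of_bool (a q) * (c q)\<^sup>2) \<le> W" "W > 0" and t: "t \<ge> 0"
  shows "measure_pmf.prob (Qa n L \<theta> a) {\<omega>. t \<le> \<bar>\<Sum>q\<in>pairs n. hq L \<theta> c q (\<omega> q)\<bar>}
     \<le> 2 * exp (- 2 * t\<^sup>2 * real L / W)"
proof (cases "t = 0")
  case True
  have "measure_pmf.prob (Qa n L \<theta> a) {\<omega>. t \<le> \<bar>\<Sum>q\<in>pairs n. hq L \<theta> c q (\<omega> q)\<bar>} \<le> 1" by simp
  thus ?thesis using True by simp
next
  case False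
  hence t0: "t > 0" using t by simp
  define X where "X \<omega> = (\<Sum>q\<in>pairs n. hq L \<theta> c q (\<omega> q))" for \<omega> :: outcome
  define V where "V = (\<Sum>q\<in>pairs n. of_bool (a q) * (c q)\<^sup>2)"
  define s where "s = 4 * t * real L / W"
  have s: "s > 0" unfolding s_def using t0 W L by auto
  have key: "exp (s\<^sup>2 * V / (8 * real L)) / exp (s * t) \<le> exp (- 2 * t\<^sup>2 * real L / W)"
  proof -
    have "s\<^sup>2 * V / (8 * real L) \<le> s\<^sup>2 * W / (8 * real L)"
      using W L unfolding V_def by (intro divide_right_mono mult_left_mono) auto
    also have "s\<^sup>2 * W / (8 * real L) - s * t = - 2 * t\<^sup>2 * real L / W"
      unfolding s_def using W L by (simp add: field_simps power2_eq_square)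
    finally have "s\<^sup>2 * V / (8 * real L) - s * t \<le> - 2 * t\<^sup>2 * real L / W" by simp
    thus ?thesis by (simp add: exp_diff[symmetric])
  qed
  have up: "measure_pmf.prob (Qa n L \<theta> a) {\<omega>. t \<le> X \<omega>} \<le> exp (- 2 * t\<^sup>2 * real L / W)"
  proof -
    have "measure_pmf.prob (Qa n L \<theta> a) {\<omega>. t \<le> X \<omega>} \<le>
        measure_pmf.expectation (Qa n L \<theta> a) (\<lambda>x. exp (s * X x)) / exp (s * t)"
      by (rule pmf_markov_exp[OF finite_Qa s])
    also have "\<dots> \<le> exp (s\<^sup>2 * V / (8 * real L)) / exp (s * t)"
      unfolding X_def V_def by (intro divide_right_mono inner_mgf L) auto
    finally show ?thesis using key by simp
  qed
  have lo: "measure_pmf.prob (Qa n L \<theta> a) {\<omega>. t \<le> - X \<omega>} \<le> exp (- 2 * t\<^sup>2 * real L / W)"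
  proof -
    have "measure_pmf.prob (Qa n L \<theta> a) {\<omega>. t \<le> - X \<omega>} \<le>
        measure_pmf.expectation (Qa n L \<theta> a) (\<lambda>x. exp (s * - X x)) / exp (s * t)"
      by (rule pmf_markov_exp[OF finite_Qa s])
    also have "\<dots> = measure_pmf.expectation (Qa n L \<theta> a) (\<lambda>x. exp ((- s) * X x)) / exp (s * t)"
      by simp
    also have "\<dots> \<le> exp ((- s)\<^sup>2 * V / (8 * real L)) / exp (s * t)"
      unfolding X_def V_def by (intro divide_right_mono inner_mgf L) auto
    finally show ?thesis using key by simp
  qed
  have "{\<omega>. t \<le> \<bar>X \<omega>\<bar>} = {\<omega>. t \<le> X \<omega>} \<union> {\<omega>. t \<le> - X \<omega>}" by auto
  hence "measure_pmf.prob (Qa n L \<theta> a) {\<omega>. t \<le> \<bar>X \<omega>\<bar>} \<le>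
      measure_pmf.prob (Qa n L \<theta> a) {\<omega>. t \<le> X \<omega>} + measure_pmf.prob (Qa n L \<theta> a) {\<omega>. t \<le> - X \<omega>}"
    by (simp add: measure_Un_le)
  thus ?thesis using up lo unfolding X_def by simp
qed

definition Aof :: "(nat \<times> nat \<Rightarrow> bool) \<Rightarrow> nat \<Rightarrow> nat \<Rightarrow> real" where
  "Aof a i j = (if i < j then of_bool (a (i, j)) else if j < i then of_bool (a (j, i)) else 0)"

lemma Aadj_Aof: "Aadj \<omega> i j = Aof (\<lambda>q. fst (\<omega> q)) i j"
  unfolding Aadj_def Aof_def by simp

definition degA :: "nat \<Rightarrow> (nat \<times> nat \<Rightarrow> bool) \<Rightarrow> nat \<Rightarrow> real" where
  "degA n a i = (\<Sum>j\<in>{..<n} - {i}. Aof a i j)"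

definition dA :: "nat \<Rightarrow> (nat \<times> nat \<Rightarrow> bool) \<Rightarrow> (nat \<Rightarrow> real) \<Rightarrow> nat \<Rightarrow> real" where
  "dA n a \<theta> i = (\<Sum>j\<in>{..<n} - {i}. Aof a i j * psi' (\<theta> i - \<theta> j))"

definition cof :: "nat \<Rightarrow> (nat \<times> nat \<Rightarrow> bool) \<Rightarrow> (nat \<Rightarrow> real) \<Rightarrow> nat \<times> nat \<Rightarrow> real" where
  "cof n a \<theta> q = 1 / dA n a \<theta> (fst q) - 1 / dA n a \<theta> (snd q)"

lemma Aof_pr: "j \<noteq> i \<Longrightarrow> Aof a i j = of_bool (a (min i j, max i j))"
  unfolding Aof_def by auto

lemma Aof_sym: "Aof a i j = Aof a j i"
  unfolding Aof_def by auto

lemma Aof_nonneg: "Aof a i j \<ge> 0"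
  unfolding Aof_def by auto

lemma bij_incident:
  assumes i: "i < n"
  shows "bij_betw (\<lambda>j. (min i j, max i j)) ({..<n} - {i}) {q \<in> pairs n. fst q = i \<or> snd q = i}"
proof (rule bij_betwI')
  fix x y assume "x \<in> {..<n} - {i}" "y \<in> {..<n} - {i}"
  thus "((min i x, max i x) = (min i y, max i y)) = (x = y)"
    by (auto simp: min_def max_def split: if_splits)
next
  fix x assume "x \<in> {..<n} - {i}"
  thus "(min i x, max i x) \<in> {q \<in> pairs n. fst q = i \<or> snd q = i}"
    using i by (auto simp: pairs_def min_def max_def)
next
  fix q assume q: "q \<in> {q \<in> pairs n. fst q = i \<or> snd q = i}"
  obtain u v where uv: "q = (u, v)" by force
  show "\<exists>x\<in>{..<n} - {i}. q = (min i x, max i x)"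
  proof (cases "u = i")
    case True thus ?thesis using q uv by (intro bexI[of _ v]) (auto simp: pairs_def)
  next
    case False thus ?thesis using q uv by (intro bexI[of _ u]) (auto simp: pairs_def)
  qed
qed

lemma prod_incident:
  assumes i: "i < n"
  shows "(\<Prod>j\<in>{..<n} - {i}. f (min i j, max i j)) =
     (\<Prod>q\<in>pairs n. if fst q = i \<or> snd q = i then f q else 1)"
proof -
  have "(\<Prod>j\<in>{..<n} - {i}. f (min i j, max i j)) = (\<Prod>q\<in>{q \<in> pairs n. fst q = i \<or> snd q = i}. f q)"
    by (rule prod.reindex_bij_betw[OF bij_incident[OF i]])
  also have "\<dots> = (\<Prod>q\<in>pairs n. if fst q = i \<or> snd q = i then f q else 1)"
    by (rule prod.inter_filter[OF finite_pairs'])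
  finally show ?thesis .
qed

lemma deg_tail:
  assumes i: "i < n" and p: "0 \<le> p" "p \<le> 1"
  shows "measure_pmf.prob (PA n p) {a. degA n a i \<le> k} \<le> exp (ln 2 * k) * (1 - p / 2) ^ (n - 1)"
proof -
  define g where "g q e = (if fst q = i \<or> snd q = i then exp (- ln 2 * of_bool e) else (1::real))" for q e
  have eq: "exp (- ln 2 * degA n a i) = (\<Prod>q\<in>pairs n. g q (a q))" for a
  proof -
    have "exp (- ln 2 * degA n a i) = (\<Prod>j\<in>{..<n} - {i}. exp (- ln 2 * Aof a i j))"
      unfolding degA_def by (simp add: sum_distrib_left exp_sum)
    also have "\<dots> = (\<Prod>j\<in>{..<n} - {i}. (\<lambda>q. exp (- ln 2 * of_bool (a q))) (min i j, max i j))"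
      by (intro prod.cong refl) (auto simp: Aof_pr)
    also have "\<dots> = (\<Prod>q\<in>pairs n. g q (a q))"
      using prod_incident[OF i, of "\<lambda>q. exp (- ln 2 * of_bool (a q))"] unfolding g_def by simp
    finally show ?thesis .
  qed
  have E: "measure_pmf.expectation (PA n p) (\<lambda>a. exp (- ln 2 * degA n a i)) = (1 - p / 2) ^ (n - 1)"
  proof -
    have "measure_pmf.expectation (PA n p) (\<lambda>a. exp (- ln 2 * degA n a i)) =
        (\<Prod>q\<in>pairs n. measure_pmf.expectation (bernoulli_pmf p) (g q))"
      unfolding eq PA_def
      by (intro expectation_prod_Pi_pmf finite_pairs' integrable_fin finite_set_pmf_bern) (auto simp: g_def)
    also have "\<dots> = (\<Prod>q\<in>pairs n. if fst q = i \<or> snd q = i then 1 - p / 2 else 1)"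
      using p by (intro prod.cong refl) (auto simp: g_def exp_minus field_simps)
    also have "\<dots> = (\<Prod>j\<in>{..<n} - {i}. (\<lambda>_. 1 - p / 2) (min i j, max i j))"
      by (rule prod_incident[OF i, symmetric])
    also have "\<dots> = (1 - p / 2) ^ (n - 1)" using i by simp
    finally show ?thesis .
  qed
  have "{a. degA n a i \<le> k} = {a. - ln 2 * k \<le> - ln 2 * degA n a i}" by auto
  hence "measure_pmf.prob (PA n p) {a. degA n a i \<le> k} =
      measure_pmf.prob (PA n p) {a. - ln 2 * k \<le> - ln 2 * degA n a i}" by simp
  also have "\<dots> \<le> measure_pmf.expectation (PA n p) (\<lambda>a. exp (1 * (- ln 2 * degA n a i))) / exp (1 * (- ln 2 * k))"
    by (rule pmf_markov_exp[OF finite_PA]) simp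
  also have "\<dots> = exp (ln 2 * k) * (1 - p / 2) ^ (n - 1)"
    using E by (simp add: exp_minus field_simps)
  finally show ?thesis .
qed

lemma support_Qa:
  assumes "\<omega> \<in> set_pmf (Qa n L \<theta> a)" "q \<in> pairs n"
  shows "fst (\<omega> q) = a q"
proof -
  have "\<omega> \<in> PiE_dflt (pairs n) (False, \<lambda>_. False) (set_pmf \<circ> (\<lambda>q. map_pmf (\<lambda>y. (a q, y)) (Yq L \<theta> q)))"
    using assms(1) unfolding Qa_def set_Pi_pmf[OF finite_pairs'] .
  hence "\<omega> q \<in> (set_pmf \<circ> (\<lambda>q. map_pmf (\<lambda>y. (a q, y)) (Yq L \<theta> q))) q" using assms(2) unfolding PiE_dflt_def by blast
  hence "\<omega> q \<in> set_pmf (map_pmf (\<lambda>y. (a q, y)) (Yq L \<theta> q))" by simp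
  thus ?thesis by auto
qed

lemma dcoef_support:
  assumes "\<omega> \<in> set_pmf (Qa n L \<theta>s a)" "i < n"
  shows "dcoef n \<omega> \<theta>s i = dA n a \<theta>s i"
  unfolding dcoef_def dA_def
proof (intro sum.cong refl)
  fix j assume j: "j \<in> {..<n} - {i}"
  have "Aadj \<omega> i j = Aof a i j"
  proof (cases "i < j")
    case True
    hence "(i, j) \<in> pairs n" using j by (auto simp: pairs_def)
    thus ?thesis using True support_Qa[OF assms(1)] unfolding Aadj_def Aof_def by auto
  next
    case False
    hence "j < i" using j by auto
    hence "(j, i) \<in> pairs n" using assms(2) by (auto simp: pairs_def)
    thus ?thesis using \<open>j < i\<close> support_Qa[OF assms(1)] unfolding Aadj_def Aof_def by auto
  qed
  thus "Aadj \<omega> i j * psi' (\<theta>s i - \<theta>s j) = Aof a i j * psi' (\<theta>s i - \<theta>s j)" by simp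
qed

lemma Ssum_support:
  assumes "\<omega> \<in> set_pmf (Qa n L \<theta>s a)"
  shows "Ssum n L \<omega> \<theta>s = (\<Sum>q\<in>pairs n. hq L \<theta>s (cof n a \<theta>s) q (\<omega> q))"
  unfolding Ssum_def case_prod_unfold
proof (intro sum.cong refl)
  fix q assume q: "q \<in> pairs n"
  then obtain i j where ij: "q = (i, j)" "i < j" "j < n" by (auto simp: pairs_def)
  have "dcoef n \<omega> \<theta>s i = dA n a \<theta>s i" "dcoef n \<omega> \<theta>s j = dA n a \<theta>s j"
    using ij by (auto intro!: dcoef_support[OF assms])
  thus "Aadj \<omega> (fst q) (snd q) * (ybar L \<omega> (fst q) (snd q) - psi (\<theta>s (fst q) - \<theta>s (snd q))) *
        (1 / dcoef n \<omega> \<theta>s (fst q) - 1 / dcoef n \<omega> \<theta>s (snd q)) = hq L \<theta>s (cof n a \<theta>s) q (\<omega> q)"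
    using ij unfolding hq_def cof_def Aadj_def ybar_def ybq_def by simp
qed

lemma W_bound:
  assumes m: "m > 0" and psi': "\<And>i j. i < n \<Longrightarrow> j < n \<Longrightarrow> psi' (\<theta> i - \<theta> j) \<ge> m"
    and k0: "k0 > 0" and deg: "\<And>i. i < n \<Longrightarrow> degA n a i \<ge> k0"
  shows "(\<Sum>q\<in>pairs n. of_bool (a q) * (cof n a \<theta> q)\<^sup>2) \<le> 2 * real n / (m\<^sup>2 * k0)"
proof -
  define d where "d i = dA n a \<theta> i" for i
  have dge: "d i \<ge> m * degA n a i" if "i < n" for i
  proof -
    have "m * degA n a i = (\<Sum>j\<in>{..<n} - {i}. Aof a i j * m)"
      unfolding degA_def by (simp add: sum_distrib_left mult.commute)
    also have "\<dots> \<le> (\<Sum>j\<in>{..<n} - {i}. Aof a i j * psi' (\<theta> i - \<theta> j))"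
      using that by (intro sum_mono mult_left_mono psi' Aof_nonneg) auto
    finally show ?thesis unfolding d_def dA_def by simp
  qed
  have dpos: "d i > 0" if "i < n" for i
    using dge[OF that] deg[OF that] k0 m by (smt (verit) mult_pos_pos)
  define F where "F i j = 2 * Aof a i j / (d i)\<^sup>2" for i j
  have "(\<Sum>q\<in>pairs n. of_bool (a q) * (cof n a \<theta> q)\<^sup>2) \<le> (\<Sum>(i, j)\<in>pairs n. F i j + F j i)"
    unfolding case_prod_unfold
  proof (intro sum_mono)
    fix q assume "q \<in> pairs n"
    then obtain i j where ij: "q = (i, j)" "i < j" "j < n" by (auto simp: pairs_def)
    have "(1 / d i - 1 / d j)\<^sup>2 \<le> 2 / (d i)\<^sup>2 + 2 / (d j)\<^sup>2"
    proof -
      have "(1 / d i - 1 / d j)\<^sup>2 \<le> 2 * (1 / d i)\<^sup>2 + 2 * (1 / d j)\<^sup>2"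
        by (smt (verit) power2_diff sum_squares_ge_zero zero_le_power2 power2_sum)
      thus ?thesis by (simp add: power_divide)
    qed
    hence "of_bool (a q) * (cof n a \<theta> q)\<^sup>2 \<le> of_bool (a q) * (2 / (d i)\<^sup>2 + 2 / (d j)\<^sup>2)"
      using ij unfolding cof_def d_def by (intro mult_left_mono) auto
    also have "\<dots> = F (fst q) (snd q) + F (snd q) (fst q)"
      using ij unfolding F_def Aof_def by (simp add: field_simps)
    finally show "of_bool (a q) * (cof n a \<theta> q)\<^sup>2 \<le> F (fst q) (snd q) + F (snd q) (fst q)" .
  qed
  also have "\<dots> = (\<Sum>i<n. \<Sum>j\<in>{..<n} - {i}. F i j)" by (rule offdiag_sum[symmetric])
  also have "\<dots> = (\<Sum>i<n. 2 * degA n a i / (d i)\<^sup>2)"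
    unfolding F_def degA_def by (simp add: sum_divide_distrib sum_distrib_left)
  also have "\<dots> \<le> (\<Sum>i<n. 2 / (m\<^sup>2 * k0))"
  proof (intro sum_mono)
    fix i assume "i \<in> {..<n}"
    hence i: "i < n" by simp
    have dg: "degA n a i > 0" using deg[OF i] k0 by simp
    have "(m * degA n a i)\<^sup>2 \<le> (d i)\<^sup>2"
      using dge[OF i] m dg by (intro power_mono) auto
    hence "2 * degA n a i / (d i)\<^sup>2 \<le> 2 * degA n a i / (m * degA n a i)\<^sup>2"
      using m dg by (intro divide_left_mono mult_pos_pos) auto
    also have "\<dots> = 2 / (m\<^sup>2 * degA n a i)" using dg by (simp add: power2_eq_square field_simps)
    also have "\<dots> \<le> 2 / (m\<^sup>2 * k0)"
      using deg[OF i] m k0 by (intro divide_left_mono mult_left_mono mult_pos_pos) auto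
    finally show "2 * degA n a i / (d i)\<^sup>2 \<le> 2 / (m\<^sup>2 * k0)" .
  qed
  also have "\<dots> = 2 * real n / (m\<^sup>2 * k0)" by simp
  finally show ?thesis .
qed

definition cutE :: "nat \<Rightarrow> nat \<Rightarrow> nat set \<Rightarrow> outcome set" where
  "cutE n L S = {\<omega>. \<not> (\<exists>u\<in>{..<n} - S. \<exists>v\<in>S. beats L \<omega> u v)}"

definition Bad :: "nat \<Rightarrow> nat set \<Rightarrow> nat \<times> nat \<Rightarrow> (bool \<times> (nat \<Rightarrow> bool)) set" where
  "Bad L S q = (if (fst q \<in> S) = (snd q \<in> S) then UNIV
     else if snd q \<in> S then {(e, y). \<not> (e \<and> (\<exists>l<L. y l))} else {(e, y). \<not> (e \<and> (\<exists>l<L. \<not> y l))})"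

lemma sum_ge1:
  fixes L l :: nat
  assumes "l < L" "y l" shows "(\<Sum>l<L. of_bool (y l) :: real) \<ge> 1"
proof -
  have "(of_bool (y l) :: real) \<le> (\<Sum>l<L. of_bool (y l))"
    by (rule member_le_sum) (use assms in auto)
  thus ?thesis using assms by simp
qed

lemma sum_leLm1:
  fixes L l :: nat
  assumes "l < L" "\<not> y l" shows "(\<Sum>l<L. of_bool (y l) :: real) \<le> real L - 1"
proof -
  have "(\<Sum>l<L. of_bool (y l) :: real) = of_bool (y l) + (\<Sum>l\<in>{..<L} - {l}. of_bool (y l))"
    using assms by (subst sum.remove[of _ l]) auto
  also have "\<dots> \<le> 0 + (\<Sum>l\<in>{..<L} - {l}. 1)" using assms by (intro add_mono sum_mono) auto
  also have "\<dots> = real L - 1" using assms by simp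
  finally show ?thesis .
qed

lemma cutE_subset:
  assumes L: "L \<ge> 1"
  shows "cutE n L S \<subseteq> Pi (pairs n) (Bad L S)"
proof
  fix \<omega> assume w: "\<omega> \<in> cutE n L S"
  show "\<omega> \<in> Pi (pairs n) (Bad L S)"
  proof
    fix q assume q: "q \<in> pairs n"
    then obtain i j where ij: "q = (i, j)" "i < j" "j < n" by (auto simp: pairs_def)
    show "\<omega> q \<in> Bad L S q"
    proof (cases "(i \<in> S) = (j \<in> S)")
      case True thus ?thesis using ij by (simp add: Bad_def)
    next
      case False
      show ?thesis
      proof (cases "j \<in> S")
        case True
        with False have iS: "i \<notin> S" by simp
        show ?thesis
        proof (rule ccontr)
          assume "\<omega> q \<notin> Bad L S q"
          hence e: "fst (\<omega> (i, j))" and "\<exists>l<L. snd (\<omega> (i, j)) l"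
            using ij True iS unfolding Bad_def by (auto split: prod.splits)
          then obtain l where l: "l < L" "snd (\<omega> (i, j)) l" by auto
          have "beats L \<omega> i j"
            unfolding beats_def Aadj_def ybar_def using ij e sum_ge1[of l L "snd (\<omega> (i, j))", OF l] L
            by (auto simp: divide_right_mono)
          thus False using w iS True ij unfolding cutE_def by auto
        qed
      next
        case False2: False
        with False have iS: "i \<in> S" by simp
        show ?thesis
        proof (rule ccontr)
          assume "\<omega> q \<notin> Bad L S q"
          hence e: "fst (\<omega> (i, j))" and "\<exists>l<L. \<not> snd (\<omega> (i, j)) l"
            using ij False2 iS unfolding Bad_def by (auto split: prod.splits)
          then obtain l where l: "l < L" "\<not> snd (\<omega> (i, j)) l" by auto
          have s: "(\<Sum>l<L. of_bool (snd (\<omega> (i, j)) l) :: real) \<le> real L - 1" by (rule sum_leLm1[of l L "snd (\<omega> (i, j))", OF l])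
          have "1 / real L \<le> 1 - (\<Sum>l<L. of_bool (snd (\<omega> (i, j)) l)) / real L"
            using s L by (simp add: field_simps)
          hence "beats L \<omega> j i"
            unfolding beats_def Aadj_def ybar_def using ij e by auto
          thus False using w iS False2 ij unfolding cutE_def by auto
        qed
      qed
    qed
  qed
qed

lemma prob_Yq_0:
  assumes L: "L \<ge> 1"
  shows "measure_pmf.prob (Yq L \<theta> q) {y. y 0} = psi (\<theta> (fst q) - \<theta> (snd q))"
    and "measure_pmf.prob (Yq L \<theta> q) {y. \<not> y 0} = 1 - psi (\<theta> (fst q) - \<theta> (snd q))"
proof -
  have m: "map_pmf (\<lambda>y. y 0) (Yq L \<theta> q) = bernoulli_pmf (psi (\<theta> (fst q) - \<theta> (snd q)))"
    unfolding Yq_def using L by (subst Pi_pmf_component) auto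
  have "measure_pmf.prob (Yq L \<theta> q) {y. y 0} = measure_pmf.prob (map_pmf (\<lambda>y. y 0) (Yq L \<theta> q)) {True}"
    by (simp add: measure_map_pmf vimage_def)
  also have "\<dots> = psi (\<theta> (fst q) - \<theta> (snd q))" unfolding m using psi_01 by (simp add: measure_pmf_single)
  finally show "measure_pmf.prob (Yq L \<theta> q) {y. y 0} = psi (\<theta> (fst q) - \<theta> (snd q))" .
  have "measure_pmf.prob (Yq L \<theta> q) {y. \<not> y 0} = measure_pmf.prob (map_pmf (\<lambda>y. y 0) (Yq L \<theta> q)) {False}"
    by (simp add: measure_map_pmf vimage_def)
  also have "\<dots> = 1 - psi (\<theta> (fst q) - \<theta> (snd q))" unfolding m using psi_01 by (simp add: measure_pmf_single)
  finally show "measure_pmf.prob (Yq L \<theta> q) {y. \<not> y 0} = 1 - psi (\<theta> (fst q) - \<theta> (snd q))" .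
qed

lemma prob_Bad:
  assumes L: "L \<ge> 1" and p: "0 \<le> p" "p \<le> 1" and q: "(fst q \<in> S) \<noteq> (snd q \<in> S)"
    and m1: "psi (\<theta> (fst q) - \<theta> (snd q)) \<ge> m1" "psi (\<theta> (snd q) - \<theta> (fst q)) \<ge> m1"
  shows "measure_pmf.prob (pair_pmf (bernoulli_pmf p) (Yq L \<theta> q)) (Bad L S q) \<le> 1 - p * m1"
proof -
  define G where "G = (if snd q \<in> S then {y. \<exists>l<L. y l} else {y. \<exists>l<L. \<not> y l})"
  have BG: "Bad L S q = UNIV - ({True} \<times> G)"
    using q unfolding Bad_def G_def by auto
  have Gb: "measure_pmf.prob (Yq L \<theta> q) G \<ge> m1"
  proof (cases "snd q \<in> S")
    case True
    have L0: "0 < L" using L by simp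
    have "{y. y 0} \<subseteq> G" using True L0 unfolding G_def by auto
    hence "measure_pmf.prob (Yq L \<theta> q) {y. y 0} \<le> measure_pmf.prob (Yq L \<theta> q) G"
      by (intro measure_pmf.finite_measure_mono) auto
    thus ?thesis using prob_Yq_0(1)[OF L] m1 by simp
  next
    case False
    have L0: "0 < L" using L by simp
    have "{y. \<not> y 0} \<subseteq> G" using False L0 unfolding G_def by auto
    hence "measure_pmf.prob (Yq L \<theta> q) {y. \<not> y 0} \<le> measure_pmf.prob (Yq L \<theta> q) G"
      by (intro measure_pmf.finite_measure_mono) auto
    moreover have "1 - psi (\<theta> (fst q) - \<theta> (snd q)) = psi (\<theta> (snd q) - \<theta> (fst q))"
      using psi_neg[of "\<theta> (fst q) - \<theta> (snd q)"] by simp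
    ultimately show ?thesis using prob_Yq_0(2)[OF L] m1 by simp
  qed
  define G' where "G' = G \<inter> set_pmf (Yq L \<theta> q)"
  have cG: "countable G'" unfolding G'_def by (intro countable_finite) (auto simp: finite_Yq)
  have "measure_pmf.prob (pair_pmf (bernoulli_pmf p) (Yq L \<theta> q)) ({True} \<times> G') =
      measure_pmf.prob (bernoulli_pmf p) {True} * measure_pmf.prob (Yq L \<theta> q) G'"
    by (rule measure_pmf_prob_product) (auto simp: cG)
  also have "measure_pmf.prob (bernoulli_pmf p) {True} = p" using p by (simp add: measure_pmf_single)
  also have "measure_pmf.prob (Yq L \<theta> q) G' = measure_pmf.prob (Yq L \<theta> q) G"
    unfolding G'_def by (rule measure_Int_set_pmf)
  finally have "measure_pmf.prob (pair_pmf (bernoulli_pmf p) (Yq L \<theta> q)) ({True} \<times> G') \<ge> p * m1"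
    using Gb p by (simp add: mult_left_mono)
  moreover have "measure_pmf.prob (pair_pmf (bernoulli_pmf p) (Yq L \<theta> q)) ({True} \<times> G') \<le>
      measure_pmf.prob (pair_pmf (bernoulli_pmf p) (Yq L \<theta> q)) ({True} \<times> G)"
    unfolding G'_def by (intro measure_pmf.finite_measure_mono) auto
  moreover have "measure_pmf.prob (pair_pmf (bernoulli_pmf p) (Yq L \<theta> q)) (UNIV - {True} \<times> G) =
      1 - measure_pmf.prob (pair_pmf (bernoulli_pmf p) (Yq L \<theta> q)) ({True} \<times> G)"
    using measure_pmf.prob_compl[of "{True} \<times> G" "pair_pmf (bernoulli_pmf p) (Yq L \<theta> q)"] by simp
  ultimately show ?thesis unfolding BG by linarith
qed

lemma card_cut:
  assumes S: "S \<subseteq> {..<n}"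
  shows "card S * (n - card S) \<le> card {q \<in> pairs n. (fst q \<in> S) \<noteq> (snd q \<in> S)}"
proof -
  define f where "f x = (min (fst x) (snd x), max (fst x) (snd x))" for x :: "nat \<times> nat"
  have fin: "finite S" using S finite_subset by blast
  have "card (S \<times> ({..<n} - S)) = card S * (n - card S)"
    using S fin by (simp add: card_cartesian_product card_Diff_subset)
  moreover have "card (S \<times> ({..<n} - S)) \<le> card {q \<in> pairs n. (fst q \<in> S) \<noteq> (snd q \<in> S)}"
  proof (rule card_inj_on_le[where f = f])
    show "inj_on f (S \<times> ({..<n} - S))"
      by (auto simp: inj_on_def f_def min_def max_def split: if_splits)
    show "f ` (S \<times> ({..<n} - S)) \<subseteq> {q \<in> pairs n. (fst q \<in> S) \<noteq> (snd q \<in> S)}"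
    proof -
      have "f (v, u) \<in> {q \<in> pairs n. (fst q \<in> S) \<noteq> (snd q \<in> S)}"
        if v: "v \<in> S" and u: "u \<in> {..<n} - S" for v u
      proof -
        have vn: "v < n" using v S by auto
        have "v \<noteq> u" using v u by auto
        thus ?thesis
          using v u vn by (cases "v < u") (auto simp: f_def pairs_def min_def max_def)
      qed
      thus ?thesis by auto
    qed
    show "finite {q \<in> pairs n. (fst q \<in> S) \<noteq> (snd q \<in> S)}" using finite_pairs' by auto
  qed
  ultimately show ?thesis by simp
qed

lemma btl_Pi: "btl_pmf n p L \<theta> = Pi_pmf (pairs n) (False, \<lambda>_. False) (\<lambda>q. pair_pmf (bernoulli_pmf p) (Yq L \<theta> q))"
  unfolding btl_pmf_def Yq_def case_prod_unfold by simp

lemma prob_cutE: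
  assumes L: "L \<ge> 1" and p: "0 \<le> p" "p \<le> 1" and m1: "0 \<le> m1" "p * m1 \<le> 1"
    and psi: "\<And>i j. i < n \<Longrightarrow> j < n \<Longrightarrow> psi (\<theta> i - \<theta> j) \<ge> m1" and S: "S \<subseteq> {..<n}"
  shows "measure_pmf.prob (btl_pmf n p L \<theta>) (cutE n L S) \<le> (1 - p * m1) ^ (card S * (n - card S))"
proof -
  define C where "C = {q \<in> pairs n. (fst q \<in> S) \<noteq> (snd q \<in> S)}"
  have "measure_pmf.prob (btl_pmf n p L \<theta>) (cutE n L S) \<le> measure_pmf.prob (btl_pmf n p L \<theta>) (Pi (pairs n) (Bad L S))"
    by (intro measure_pmf.finite_measure_mono cutE_subset L) auto
  also have "\<dots> = (\<Prod>q\<in>pairs n. measure_pmf.prob (pair_pmf (bernoulli_pmf p) (Yq L \<theta> q)) (Bad L S q))"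
    unfolding btl_Pi by (rule measure_Pi_pmf_Pi[OF finite_pairs'])
  also have "\<dots> \<le> (\<Prod>q\<in>pairs n. if q \<in> C then 1 - p * m1 else 1)"
  proof (intro prod_mono conjI)
    fix q assume q: "q \<in> pairs n"
    show "0 \<le> measure_pmf.prob (pair_pmf (bernoulli_pmf p) (Yq L \<theta> q)) (Bad L S q)" by simp
    show "measure_pmf.prob (pair_pmf (bernoulli_pmf p) (Yq L \<theta> q)) (Bad L S q) \<le> (if q \<in> C then 1 - p * m1 else 1)"
    proof (cases "q \<in> C")
      case True
      have "fst q < n" "snd q < n" using q by (auto simp: pairs_def)
      thus ?thesis using True unfolding C_def
        by (simp add: prob_Bad[OF L p] psi)
    next
      case False thus ?thesis by simp
    qed
  qed
  also have "\<dots> = (\<Prod>q\<in>C. 1 - p * m1)"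
  proof -
    have "(\<Prod>q\<in>pairs n. if q \<in> C then 1 - p * m1 else 1) = (\<Prod>q\<in>{q\<in>pairs n. q \<in> C}. 1 - p * m1)"
      by (rule prod.inter_filter[OF finite_pairs', symmetric])
    moreover have "{q\<in>pairs n. q \<in> C} = C" unfolding C_def by auto
    ultimately show ?thesis by simp
  qed
  also have "\<dots> = (1 - p * m1) ^ card C" by simp
  also have "\<dots> \<le> (1 - p * m1) ^ (card S * (n - card S))"
    using card_cut[OF S] m1 p unfolding C_def by (intro power_decreasing) (auto simp: mult_nonneg_nonneg)
  finally show ?thesis .
qed

definition Sets :: "nat \<Rightarrow> nat set set" where
  "Sets n = {S. S \<subseteq> {..<n} \<and> S \<noteq> {} \<and> S \<noteq> {..<n}}"

lemma finite_Sets: "finite (Sets n)"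
  unfolding Sets_def by (rule finite_subset[of _ "Pow {..<n}"]) auto

lemma conn_fail:
  assumes L: "L \<ge> 1" and p: "0 \<le> p" "p \<le> 1" and m1: "0 \<le> m1" "p * m1 \<le> 1"
    and psi: "\<And>i j. i < n \<Longrightarrow> j < n \<Longrightarrow> psi (\<theta> i - \<theta> j) \<ge> m1"
  shows "measure_pmf.prob (btl_pmf n p L \<theta>) {\<omega>. \<not> conn n L \<omega>} \<le>
     (\<Sum>S\<in>Sets n. (1 - p * m1) ^ (card S * (n - card S)))"
proof -
  have "{\<omega>. \<not> conn n L \<omega>} \<subseteq> (\<Union>S\<in>Sets n. cutE n L S)"
    unfolding conn_def cutE_def Sets_def by auto
  hence "measure_pmf.prob (btl_pmf n p L \<theta>) {\<omega>. \<not> conn n L \<omega>} \<le>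
      measure_pmf.prob (btl_pmf n p L \<theta>) (\<Union>S\<in>Sets n. cutE n L S)"
    by (intro measure_pmf.finite_measure_mono) auto
  also have "\<dots> \<le> (\<Sum>S\<in>Sets n. measure_pmf.prob (btl_pmf n p L \<theta>) (cutE n L S))"
    by (intro measure_UNION_le finite_Sets) auto
  also have "\<dots> \<le> (\<Sum>S\<in>Sets n. (1 - p * m1) ^ (card S * (n - card S)))"
    by (intro sum_mono prob_cutE[OF L p m1 psi]) (auto simp: Sets_def)
  finally show ?thesis .
qed

lemma sum_pow_card:
  fixes y :: real
  assumes "finite A"
  shows "(\<Sum>S\<in>Pow A. y ^ card S) = (1 + y) ^ card A"
  using assms
proof (induction A rule: finite_induct)
  case empty thus ?case by simp
next
  case (insert a A)
  have fin: "finite (Pow A)" using insert by simp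
  have inj: "inj_on (insert a) (Pow A)"
    using insert(2) by (auto simp: inj_on_def)
  have disj: "Pow A \<inter> insert a ` Pow A = {}" using insert(2) by auto
  have "(\<Sum>S\<in>Pow (insert a A). y ^ card S) = (\<Sum>S\<in>Pow A. y ^ card S) + (\<Sum>S\<in>insert a ` Pow A. y ^ card S)"
    unfolding Pow_insert using fin disj by (intro sum.union_disjoint) auto
  also have "(\<Sum>S\<in>insert a ` Pow A. y ^ card S) = (\<Sum>S\<in>Pow A. y ^ card (insert a S))"
    by (rule sum.reindex[OF inj, unfolded comp_def])
  also have "\<dots> = (\<Sum>S\<in>Pow A. y * y ^ card S)"
  proof (intro sum.cong refl)
    fix S assume "S \<in> Pow A"
    hence "finite S" "a \<notin> S" using insert finite_subset by auto
    thus "y ^ card (insert a S) = y * y ^ card S" by simp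
  qed
  finally show ?case using insert by (simp add: sum_distrib_left[symmetric] algebra_simps)
qed

lemma cut_term_bound:
  fixes x :: real
  assumes x: "0 \<le> x" "x \<le> 1" and k: "k \<le> n"
  shows "(1 - x) ^ (k * (n - k)) \<le> exp (- x * real n / 2) ^ k + exp (- x * real n / 2) ^ (n - k)"
proof -
  define y where "y = exp (- x * real n / 2)"
  define j where "j = min k (n - k)"
  have "(1 - x) ^ (k * (n - k)) \<le> exp (- x) ^ (k * (n - k))"
    using x by (intro power_mono) (auto simp: exp_ge_add_one_self[of "-x", simplified])
  also have "\<dots> = exp (- x * real (k * (n - k)))"
    by (simp add: exp_of_nat_mult[symmetric] mult.commute)
  also have "\<dots> \<le> exp (- x * (real n / 2 * real j))"
  proof -
    have "real n / 2 * real j \<le> real (k * (n - k))"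
    proof (cases "k \<le> n - k")
      case True
      hence "real n / 2 \<le> real (n - k)" using k by linarith
      hence "real n / 2 * real k \<le> real (n - k) * real k" by (intro mult_right_mono) auto
      thus ?thesis using True unfolding j_def by (simp add: mult.commute)
    next
      case False
      hence "real n / 2 \<le> real k" using k by linarith
      hence "real n / 2 * real (n - k) \<le> real k * real (n - k)" by (intro mult_right_mono) auto
      thus ?thesis using False unfolding j_def by simp
    qed
    hence "- x * real (k * (n - k)) \<le> - x * (real n / 2 * real j)" using x by (intro mult_left_mono_neg) auto
    thus ?thesis by simp
  qed
  also have "\<dots> = y ^ j" unfolding y_def by (simp add: exp_of_nat_mult[symmetric] algebra_simps)
  also have "\<dots> \<le> y ^ k + y ^ (n - k)"
    unfolding j_def y_def by (cases "k \<le> n - k") (auto simp: min_def)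
  finally show ?thesis unfolding y_def .
qed

lemma conn_sum_bound:
  fixes x :: real
  assumes x: "0 \<le> x" "x \<le> 1" and small: "real n * exp (- x * real n / 2) \<le> 1 / 2"
  shows "(\<Sum>S\<in>Sets n. (1 - x) ^ (card S * (n - card S))) \<le> 4 * real n * exp (- x * real n / 2)"
proof -
  define y where "y = exp (- x * real n / 2)"
  have y0: "y \<ge> 0" unfolding y_def by simp
  have cS: "card S \<le> n" if "S \<in> Sets n" for S
    using that card_mono[of "{..<n}" S] unfolding Sets_def by auto
  have "(\<Sum>S\<in>Sets n. (1 - x) ^ (card S * (n - card S))) \<le> (\<Sum>S\<in>Sets n. y ^ card S + y ^ (n - card S))"
    unfolding y_def by (intro sum_mono cut_term_bound x cS)
  also have "\<dots> = (\<Sum>S\<in>Sets n. y ^ card S) + (\<Sum>S\<in>Sets n. y ^ (n - card S))"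
    by (rule sum.distrib)
  also have "(\<Sum>S\<in>Sets n. y ^ (n - card S)) = (\<Sum>S\<in>Sets n. y ^ card S)"
  proof -
    have bij: "bij_betw (\<lambda>S. {..<n} - S) (Sets n) (Sets n)"
      by (rule bij_betwI[where g = "\<lambda>S. {..<n} - S"]) (auto simp: Sets_def)
    have "(\<Sum>S\<in>Sets n. y ^ card S) = (\<Sum>S\<in>Sets n. y ^ card ({..<n} - S))"
      by (rule sum.reindex_bij_betw[OF bij, symmetric])
    also have "\<dots> = (\<Sum>S\<in>Sets n. y ^ (n - card S))"
      by (intro sum.cong refl) (auto simp: Sets_def card_Diff_subset finite_subset)
    finally show ?thesis by simp
  qed
  also have "(\<Sum>S\<in>Sets n. y ^ card S) \<le> (\<Sum>S\<in>Pow {..<n} - {{}}. y ^ card S)"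
    using y0 by (intro sum_mono2) (auto simp: Sets_def)
  also have "\<dots> = (1 + y) ^ n - 1"
    using sum_pow_card[of "{..<n}" y] by (simp add: sum_diff1)
  also have "(1 + y) ^ n \<le> exp (real n * y)"
  proof -
    have "(1 + y) ^ n \<le> exp y ^ n" using y0 by (intro power_mono) auto
    thus ?thesis by (simp add: exp_of_nat_mult[symmetric])
  qed
  hence "(1 + y) ^ n - 1 \<le> 2 * (real n * y)"
    using real_exp_bound_lemma[of "real n * y"] small y0 unfolding y_def by auto
  hence "(1 + y) ^ n - 1 + ((1 + y) ^ n - 1) \<le> 4 * real n * y" by simp
  finally show ?thesis unfolding y_def by simp
qed

lemma psi_lb:
  assumes "\<bar>x\<bar> \<le> K" shows "psi x \<ge> 1 / (2 * exp K)"
proof -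
  have e: "exp (- x) \<le> exp K" using assms by simp
  have K0: "K \<ge> 0" using assms by simp
  have "1 \<le> exp K" using K0 by simp
  hence d: "1 + exp (- x) \<le> 2 * exp K" using e by linarith
  have "psi x = 1 / (1 + exp (- x))"
    unfolding psi_def exp_minus by (simp add: field_simps add_pos_pos)
  also have "\<dots> \<ge> 1 / (2 * exp K)"
    using d by (intro divide_left_mono) (auto intro!: mult_pos_pos add_pos_pos)
  finally show ?thesis .
qed

lemma psi'_lb:
  assumes "\<bar>x\<bar> \<le> K" shows "psi' x \<ge> 1 / (4 * exp K)"
proof -
  have e1: "exp (- x) \<le> exp K" "exp x \<le> exp K" using assms by auto
  have K0: "K \<ge> 0" using assms by simp
  have "1 \<le> exp K" using K0 by simp
  hence d: "exp (- x) + 2 + exp x \<le> 4 * exp K" using e1 by linarith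
  have p: "exp (- x) + 2 + exp x > 0" by (smt (verit) exp_gt_zero)
  have "psi' x = 1 / (exp (- x) + 2 + exp x)"
    unfolding psi'_def exp_minus by (simp add: field_simps power2_eq_square)
  also have "\<dots> \<ge> 1 / (4 * exp K)"
    using d p by (intro divide_left_mono) auto
  finally show ?thesis .
qed

lemma prob_bind_le:
  assumes fin: "finite (set_pmf M)" and le: "\<And>x. x \<in> set_pmf M \<Longrightarrow> measure_pmf.prob (N x) X \<le> g x"
    and g0: "\<And>x. g x \<ge> 0"
  shows "measure_pmf.prob (bind_pmf M N) X \<le> measure_pmf.expectation M g"
proof -
  have "ennreal (measure_pmf.prob (bind_pmf M N) X) = emeasure (measure_pmf (bind_pmf M N)) X"
    by (simp add: measure_pmf.emeasure_eq_measure)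
  also have "\<dots> = (\<integral>\<^sup>+x. emeasure (measure_pmf (N x)) X \<partial>M)" by simp
  also have "\<dots> \<le> (\<integral>\<^sup>+x. ennreal (g x) \<partial>M)"
    by (intro nn_integral_mono_AE AE_pmfI) (auto simp: measure_pmf.emeasure_eq_measure intro: ennreal_leI le)
  also have "\<dots> = ennreal (measure_pmf.expectation M g)"
    by (intro nn_integral_eq_integral integrable_fin fin) (auto simp: g0)
  finally show ?thesis
    by (subst (asm) ennreal_le_iff) (auto intro: integral_nonneg_AE g0)
qed

lemma exp_ln_pow:
  assumes "n \<ge> (1::nat)" shows "exp (- real k * ln (real n)) = 1 / real n ^ k"
proof -
  have "exp (real k * ln (real n)) = exp (ln (real n)) ^ k" by (rule exp_of_nat_mult)
  also have "\<dots> = real n ^ k" using assms by simp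
  finally show ?thesis by (simp add: exp_minus field_simps)
qed

lemma sqrt_identity:
  assumes "n > 0" "p > 0" "L > 0" "l \<ge> 0"
  shows "sqrt (l / (p * L)) / n = 1 / sqrt (n * p * L) * sqrt (l / n)"
proof -
  have "1 / sqrt (n * p * L) * sqrt (l / n) = sqrt (l / (n * (n * p * L)))"
    using assms by (simp add: real_sqrt_divide real_sqrt_mult)
  also have "l / (n * (n * p * L)) = (l / (p * L)) / n\<^sup>2"
    using assms by (simp add: field_simps power2_eq_square)
  also have "sqrt ((l / (p * L)) / n\<^sup>2) = sqrt (l / (p * L)) / sqrt (n\<^sup>2)"
    by (rule real_sqrt_divide)
  also have "sqrt (n\<^sup>2) = n" using assms by simp
  finally show ?thesis by simp
qed

lemma arithA:
  fixes n :: nat and p k0 :: real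
  assumes n2: "n \<ge> 2" and p: "0 < p" "p \<le> 1" and k0: "k0 = real (n - 1) * p / 4"
    and c1: "real (n - 1) * p \<ge> 44 * ln (real n)"
  shows "real n * (exp (ln 2 * k0) * (1 - p / 2) ^ (n - 1)) \<le> 1 / real n ^ 10"
proof -
  have "(1 - p / 2) ^ (n - 1) \<le> exp (- p / 2) ^ (n - 1)"
    using p by (intro power_mono) (auto simp: exp_ge_add_one_self[of "- p / 2", simplified])
  also have "\<dots> = exp (- real (n - 1) * p / 2)" by (simp add: exp_of_nat_mult[symmetric])
  finally have a: "(1 - p / 2) ^ (n - 1) \<le> exp (- real (n - 1) * p / 2)" .
  have np0: "real (n - 1) * p \<ge> 0" using p by simp
  have h: "ln 2 * (real (n - 1) * p) \<le> 1 * (real (n - 1) * p)"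
    by (rule mult_right_mono[OF less_imp_le[OF ln_2_less_1] np0])
  have "ln 2 * k0 = (ln 2 * (real (n - 1) * p)) / 4" unfolding k0 by simp
  hence "ln 2 * k0 + (- real (n - 1) * p / 2) \<le> - real (n - 1) * p / 4"
    using h by linarith
  also have "\<dots> \<le> - 11 * ln (real n)" using c1 by simp
  finally have b: "ln 2 * k0 + (- real (n - 1) * p / 2) \<le> - real (11::nat) * ln (real n)" by simp
  have "exp (ln 2 * k0) * (1 - p / 2) ^ (n - 1) \<le> exp (ln 2 * k0) * exp (- real (n - 1) * p / 2)"
    using a by (intro mult_left_mono) auto
  also have "\<dots> = exp (ln 2 * k0 + (- real (n - 1) * p / 2))" by (rule exp_add[symmetric])
  also have "\<dots> \<le> exp (- real (11::nat) * ln (real n))" using b by simp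
  also have "\<dots> = 1 / real n ^ 11" using n2 by (intro exp_ln_pow) auto
  finally have "real n * (exp (ln 2 * k0) * (1 - p / 2) ^ (n - 1)) \<le> real n * (1 / real n ^ 11)"
    by (intro mult_left_mono) auto
  also have "\<dots> = 1 / real n ^ 10"
  proof -
    have "real n ^ 11 = real n ^ (1 + 10)" by simp
    also have "\<dots> = real n * real n ^ 10" by (simp only: power_add power_one_right)
    finally show ?thesis using n2 by simp
  qed
  finally show ?thesis .
qed

lemma arithB:
  fixes n :: nat and x :: real
  assumes n2: "n \<ge> 2" and c2: "x * real n \<ge> 22 * ln (real n)"
  shows "real n * exp (- x * real n / 2) \<le> 1 / real n ^ 10"
proof -
  have "exp (- x * real n / 2) \<le> exp (- real (11::nat) * ln (real n))" using c2 by simp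
  also have "\<dots> = 1 / real n ^ 11" using n2 by (intro exp_ln_pow) auto
  finally have "real n * exp (- x * real n / 2) \<le> real n * (1 / real n ^ 11)"
    by (intro mult_left_mono) auto
  also have "\<dots> = 1 / real n ^ 10"
  proof -
    have "real n ^ 11 = real n ^ (1 + 10)" by simp
    also have "\<dots> = real n * real n ^ 10" by (simp only: power_add power_one_right)
    finally show ?thesis using n2 by simp
  qed
  finally show ?thesis .
qed

lemma arithC:
  fixes n L :: nat and p K t W k0 m C' :: real
  assumes n2: "n \<ge> 2" and L: "L \<ge> 1" and p: "0 < p" and K: "K > 0"
    and m: "m = 1 / (4 * exp K)" and C': "C' = 36 * exp K"
    and t: "t = C' * sqrt (ln (real n) / (p * real L))"
    and k0: "k0 = real (n - 1) * p / 4" and W: "W = 2 * real n / (m\<^sup>2 * k0)"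
  shows "2 * exp (- 2 * t\<^sup>2 * real L / W) \<le> 2 / real n ^ 10"
proof -
  have ln0: "ln (real n) \<ge> 0" using n2 by simp
  have Cm: "C' * m = 9" unfolding C' m by simp
  have t2: "t\<^sup>2 = C'\<^sup>2 * (ln (real n) / (p * real L))"
    unfolding t using ln0 p L by (simp add: power_mult_distrib)
  have n1: "real (n - 1) \<ge> real n / 2" using n2 by linarith
  have "2 * t\<^sup>2 * real L / W = (C' * m)\<^sup>2 * ln (real n) * real (n - 1) / (4 * real n)"
    unfolding t2 W k0 using p L n2 by (simp add: field_simps power2_eq_square)
  also have "\<dots> = 81 * ln (real n) * real (n - 1) / (4 * real n)" unfolding Cm by simp
  also have "\<dots> \<ge> 81 * ln (real n) * (real n / 2) / (4 * real n)"
    using n1 ln0 n2 by (intro divide_right_mono mult_left_mono) auto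
  finally have X: "2 * t\<^sup>2 * real L / W \<ge> 81 * ln (real n) * (real n / 2) / (4 * real n)" .
  have "81 * ln (real n) * (real n / 2) / (4 * real n) = 81 * ln (real n) / 8" using n2 by (simp add: field_simps)
  hence "2 * t\<^sup>2 * real L / W \<ge> real (10::nat) * ln (real n)" using X ln0 by simp
  hence "exp (- 2 * t\<^sup>2 * real L / W) \<le> exp (- real (10::nat) * ln (real n))" by simp
  also have "\<dots> = 1 / real n ^ 10" using n2 by (intro exp_ln_pow) auto
  finally show ?thesis by simp
qed

lemma main_fixed:
  fixes n L :: nat and p K :: real and \<theta> :: "nat \<Rightarrow> real"
  assumes n2: "n \<ge> 2" and L: "L \<ge> 1" and p: "0 < p" "p \<le> 1" and K: "K > 0"
    and th: "\<And>i j. i < n \<Longrightarrow> j < n \<Longrightarrow> \<theta> i - \<theta> j \<le> K" and s0: "(\<Sum>i<n. \<theta> i) = 0"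
    and c1: "real (n - 1) * p \<ge> 44 * ln (real n)"
    and c2: "p * (1 / (2 * exp K)) * real n \<ge> 22 * ln (real n)"
  shows "measure_pmf.prob (btl_pmf n p L \<theta>)
      {\<omega>. mle_set n L \<omega> \<noteq> {} \<and>
           (\<forall>\<theta>h\<in>mle_set n L \<omega>.
              \<bar>(1 / real n) * (\<Sum>i<n. delta n L \<omega> \<theta> \<theta>h i)\<bar>
                \<le> (36 * exp K) * (1 / sqrt (real n * p * real L)) * sqrt (ln (real n) / real n))}
      \<ge> 1 - 7 / real n ^ 10"
proof -
  define m where "m = 1 / (4 * exp K)"
  define m1 where "m1 = 1 / (2 * exp K)"
  define C' where "C' = 36 * exp K"
  define t where "t = C' * sqrt (ln (real n) / (p * real L))"
  define k0 where "k0 = real (n - 1) * p / 4"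
  define W where "W = 2 * real n / (m\<^sup>2 * k0)"
  define Good where "Good = {\<omega>. mle_set n L \<omega> \<noteq> {} \<and>
           (\<forall>\<theta>h\<in>mle_set n L \<omega>.
              \<bar>(1 / real n) * (\<Sum>i<n. delta n L \<omega> \<theta> \<theta>h i)\<bar>
                \<le> (36 * exp K) * (1 / sqrt (real n * p * real L)) * sqrt (ln (real n) / real n))}"
  define B1 where "B1 = {\<omega>. \<not> conn n L \<omega>}"
  define B2 where "B2 = {\<omega>. t < \<bar>Ssum n L \<omega> \<theta>\<bar>}"
  have ab: "\<bar>\<theta> i - \<theta> j\<bar> \<le> K" if "i < n" "j < n" for i j
    using th[OF that] th[OF that(2,1)] by auto
  have psiL: "psi (\<theta> i - \<theta> j) \<ge> m1" if "i < n" "j < n" for i j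
    unfolding m1_def by (rule psi_lb[OF ab[OF that]])
  have psi'L: "psi' (\<theta> i - \<theta> j) \<ge> m" if "i < n" "j < n" for i j
    unfolding m_def by (rule psi'_lb[OF ab[OF that]])
  have m0: "m > 0" unfolding m_def by simp
  have eK: "1 \<le> exp K" using K by simp
  have m10: "m1 \<ge> 0" "m1 \<le> 1"
  proof -
    have h: "1 \<le> 2 * exp K" using eK by linarith
    show "m1 \<ge> 0" unfolding m1_def by simp
    show "m1 \<le> 1" unfolding m1_def using h by simp
  qed
  have ln0: "ln (real n) \<ge> 0" using n2 by simp
  have t0: "t \<ge> 0" unfolding t_def C'_def using ln0 p L by simp
  have k00: "k0 > 0" unfolding k0_def using n2 p by simp
  have W0: "W > 0" unfolding W_def using m0 k00 n2 by simp
  have sub: "UNIV - Good \<subseteq> B1 \<union> B2"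
  proof
    fix \<omega> assume w: "\<omega> \<in> UNIV - Good"
    show "\<omega> \<in> B1 \<union> B2"
    proof (rule ccontr)
      assume "\<omega> \<notin> B1 \<union> B2"
      hence c: "conn n L \<omega>" and St: "\<bar>Ssum n L \<omega> \<theta>\<bar> \<le> t" unfolding B1_def B2_def by auto
      have "\<omega> \<in> Good"
        unfolding Good_def
      proof (intro CollectI conjI ballI)
        show "mle_set n L \<omega> \<noteq> {}" by (rule mle_exists[OF L c])
        fix \<theta>h assume h: "\<theta>h \<in> mle_set n L \<omega>"
        have "\<bar>(1 / real n) * (\<Sum>i<n. delta n L \<omega> \<theta> \<theta>h i)\<bar> = \<bar>Ssum n L \<omega> \<theta>\<bar> / real n"
          unfolding sum_delta[OF h s0] using n2 by (simp add: abs_mult)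
        also have "\<dots> \<le> t / real n" using St n2 by (intro divide_right_mono) auto
        also have "\<dots> = C' * (sqrt (ln (real n) / (p * real L)) / real n)" unfolding t_def by simp
        also have "\<dots> = C' * (1 / sqrt (real n * p * real L) * sqrt (ln (real n) / real n))"
          using sqrt_identity[of "real n" p "real L" "ln (real n)"] n2 p L ln0 by simp
        finally show "\<bar>(1 / real n) * (\<Sum>i<n. delta n L \<omega> \<theta> \<theta>h i)\<bar>
                \<le> (36 * exp K) * (1 / sqrt (real n * p * real L)) * sqrt (ln (real n) / real n)"
          unfolding C'_def by (simp add: mult.assoc)
      qed
      thus False using w by simp
    qed
  qed
  have PB1: "measure_pmf.prob (btl_pmf n p L \<theta>) B1 \<le> 4 / real n ^ 10"
  proof -
    have x01: "0 \<le> p * m1" "p * m1 \<le> 1" using p m10 by (auto simp: mult_le_one)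
    have xb: "real n * exp (- (p * m1) * real n / 2) \<le> 1 / real n ^ 10"
      by (rule arithB[OF n2]) (use c2 in \<open>simp add: m1_def\<close>)
    have "1 / real n ^ 10 \<le> 1 / 2"
    proof -
      have "(2::real) \<le> real n ^ 10" using n2
        by (metis numeral_le_real_of_nat_iff of_nat_power order_trans self_le_power zero_less_numeral power_increasing_iff order.refl one_le_numeral le_numeral_extra(4)) 
      thus ?thesis using n2 by (intro divide_left_mono) auto
    qed
    hence small: "real n * exp (- (p * m1) * real n / 2) \<le> 1 / 2" using xb by linarith
    have "measure_pmf.prob (btl_pmf n p L \<theta>) B1 \<le> (\<Sum>S\<in>Sets n. (1 - p * m1) ^ (card S * (n - card S)))"
      unfolding B1_def by (rule conn_fail[OF L less_imp_le[OF p(1)] p(2) m10(1) x01(2) psiL])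
    also have "\<dots> \<le> 4 * real n * exp (- (p * m1) * real n / 2)"
      by (rule conn_sum_bound[OF x01 small])
    also have "\<dots> \<le> 4 / real n ^ 10" using xb by simp
    finally show ?thesis .
  qed
  define Bd where "Bd = {a. \<exists>i<n. degA n a i \<le> k0}"
  have PBd: "measure_pmf.prob (PA n p) Bd \<le> 1 / real n ^ 10"
  proof -
    have "Bd = (\<Union>i\<in>{..<n}. {a. degA n a i \<le> k0})" unfolding Bd_def by auto
    hence "measure_pmf.prob (PA n p) Bd \<le> (\<Sum>i<n. measure_pmf.prob (PA n p) {a. degA n a i \<le> k0})"
      by (simp add: measure_UNION_le)
    also have "\<dots> \<le> (\<Sum>i<n. exp (ln 2 * k0) * (1 - p / 2) ^ (n - 1))"
      by (intro sum_mono deg_tail) (use p in auto)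
    also have "\<dots> = real n * (exp (ln 2 * k0) * (1 - p / 2) ^ (n - 1))" by simp
    also have "\<dots> \<le> 1 / real n ^ 10" by (rule arithA[OF n2 p k0_def c1])
    finally show ?thesis .
  qed
  have tail: "2 * exp (- 2 * t\<^sup>2 * real L / W) \<le> 2 / real n ^ 10"
    by (rule arithC[OF n2 L p(1) K m_def C'_def t_def k0_def W_def])
  have PB2: "measure_pmf.prob (btl_pmf n p L \<theta>) B2 \<le> 3 / real n ^ 10"
  proof -
    define g where "g a = indicator Bd a + 2 / real n ^ 10" for a :: "nat \<times> nat \<Rightarrow> bool"
    have "measure_pmf.prob (btl_pmf n p L \<theta>) B2 \<le> measure_pmf.expectation (PA n p) g"
      unfolding btl_bind
    proof (rule prob_bind_le[OF finite_PA])
      show "0 \<le> g a" for a unfolding g_def by simp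
      fix a assume "a \<in> set_pmf (PA n p)"
      show "measure_pmf.prob (Qa n L \<theta> a) B2 \<le> g a"
      proof (cases "a \<in> Bd")
        case True
        have "measure_pmf.prob (Qa n L \<theta> a) B2 \<le> 1" by simp
        moreover have "0 \<le> 2 / real n ^ 10" by simp
        moreover have "g a = 1 + 2 / real n ^ 10" unfolding g_def using True by simp
        ultimately show ?thesis by linarith
      next
        case False
        hence deg: "degA n a i \<ge> k0" if "i < n" for i using that unfolding Bd_def by force
        have Wb: "(\<Sum>q\<in>pairs n. of_bool (a q) * (cof n a \<theta> q)\<^sup>2) \<le> W"
          unfolding W_def by (rule W_bound[OF m0 psi'L k00 deg])
        have "measure_pmf.prob (Qa n L \<theta> a) B2 = measure_pmf.prob (Qa n L \<theta> a) (B2 \<inter> set_pmf (Qa n L \<theta> a))"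
          by (simp add: measure_Int_set_pmf)
        also have "\<dots> \<le> measure_pmf.prob (Qa n L \<theta> a) {\<omega>. t \<le> \<bar>\<Sum>q\<in>pairs n. hq L \<theta> (cof n a \<theta>) q (\<omega> q)\<bar>}"
          by (intro measure_pmf.finite_measure_mono) (auto simp: B2_def Ssum_support)
        also have "\<dots> \<le> 2 * exp (- 2 * t\<^sup>2 * real L / W)"
          by (rule inner_tail[OF L Wb W0 t0])
        also have "\<dots> \<le> g a" using tail False unfolding g_def by simp
        finally show ?thesis .
      qed
    qed
    also have "measure_pmf.expectation (PA n p) g = measure_pmf.prob (PA n p) Bd + 2 / real n ^ 10"
      unfolding g_def by (subst Bochner_Integration.integral_add) (auto intro: integrable_fin[OF finite_PA])
    also have "\<dots> \<le> 3 / real n ^ 10" using PBd by simp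
    finally show ?thesis .
  qed
  have "measure_pmf.prob (btl_pmf n p L \<theta>) (UNIV - Good) \<le> measure_pmf.prob (btl_pmf n p L \<theta>) (B1 \<union> B2)"
    using sub by (intro measure_pmf.finite_measure_mono) auto
  also have "\<dots> \<le> measure_pmf.prob (btl_pmf n p L \<theta>) B1 + measure_pmf.prob (btl_pmf n p L \<theta>) B2"
    by (simp add: measure_Un_le)
  also have "\<dots> \<le> 7 / real n ^ 10" using PB1 PB2 by simp
  finally have "measure_pmf.prob (btl_pmf n p L \<theta>) (UNIV - Good) \<le> 7 / real n ^ 10" .
  moreover have "measure_pmf.prob (btl_pmf n p L \<theta>) (UNIV - Good) = 1 - measure_pmf.prob (btl_pmf n p L \<theta>) Good"
    using measure_pmf.prob_compl[of Good "btl_pmf n p L \<theta>"] by simp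
  ultimately show ?thesis unfolding Good_def by simp
qed

theorem lemma5p3:
  fixes p :: "nat \<Rightarrow> real" and L :: "nat \<Rightarrow> nat" and \<kappa> :: "nat \<Rightarrow> real"
    and \<theta>s :: "nat \<Rightarrow> nat \<Rightarrow> real" and K :: real
  assumes p_range: "\<And>n. 0 < p n \<and> p n \<le> 1"
    and L_pos: "\<And>n. L n \<ge> 1"
    and kappa_pos: "\<And>n. \<kappa> n > 0"
    and kappa_bdd: "\<And>n. \<kappa> n \<le> K"
    and theta_in: "\<And>n. \<theta>s n \<in> Theta n (\<kappa> n)"
    and dense: "(\<lambda>n. ln (real n) / (real n * p n)) \<longlonglongrightarrow> 0"
  shows "\<exists>C C'. \<forall>\<^sub>F n in sequentially. n \<ge> 2 \<and>
    measure_pmf.prob (btl_pmf n (p n) (L n) (\<theta>s n))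
      {\<omega>. mle_set n (L n) \<omega> \<noteq> {} \<and>
           (\<forall>\<theta>h\<in>mle_set n (L n) \<omega>.
              \<bar>(1 / real n) * (\<Sum>i<n. delta n (L n) \<omega> (\<theta>s n) \<theta>h i)\<bar>
                \<le> C' * (1 / sqrt (real n * p n * real (L n))) * sqrt (ln (real n) / real n))}
      \<ge> 1 - C / real n ^ 10"
proof -
  have K: "K > 0" using kappa_pos[of 0] kappa_bdd[of 0] by linarith
  define m1 where "m1 = 1 / (2 * exp K)"
  have m1: "m1 > 0" unfolding m1_def by simp
  define \<epsilon> where "\<epsilon> = min (1 / 88) (m1 / 22)"
  have \<epsilon>: "\<epsilon> > 0" unfolding \<epsilon>_def using m1 by simp
  have ev1: "\<forall>\<^sub>F n in sequentially. ln (real n) / (real n * p n) < \<epsilon>"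
    using order_tendstoD(2)[OF dense \<epsilon>] .
  have ev2: "\<forall>\<^sub>F n in sequentially. n \<ge> 2" by (rule eventually_ge_at_top)
  have "\<forall>\<^sub>F n in sequentially. n \<ge> 2 \<and>
    measure_pmf.prob (btl_pmf n (p n) (L n) (\<theta>s n))
      {\<omega>. mle_set n (L n) \<omega> \<noteq> {} \<and>
           (\<forall>\<theta>h\<in>mle_set n (L n) \<omega>.
              \<bar>(1 / real n) * (\<Sum>i<n. delta n (L n) \<omega> (\<theta>s n) \<theta>h i)\<bar>
                \<le> (36 * exp K) * (1 / sqrt (real n * p n * real (L n))) * sqrt (ln (real n) / real n))}
      \<ge> 1 - 7 / real n ^ 10"
    using ev1 ev2
  proof eventually_elim
    case (elim n)
    have n2: "n \<ge> 2" using elim by simp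
    have pn: "0 < p n" "p n \<le> 1" using p_range[of n] by auto
    have np: "real n * p n > 0" using n2 pn by simp
    have ln0: "ln (real n) \<ge> 0" using n2 by simp
    have lnb: "ln (real n) \<le> \<epsilon> * (real n * p n)"
      using elim np by (simp add: divide_less_eq less_imp_le)
    have c1: "real (n - 1) * p n \<ge> 44 * ln (real n)"
    proof -
      have "ln (real n) \<le> (1 / 88) * (real n * p n)"
        using lnb np unfolding \<epsilon>_def by (smt (verit) min.cobounded1 mult_right_mono)
      moreover have "real n * p n \<le> 2 * (real (n - 1) * p n)"
        using n2 pn by (simp add: field_simps)
      ultimately show ?thesis by linarith
    qed
    have c2: "p n * (1 / (2 * exp K)) * real n \<ge> 22 * ln (real n)"
    proof -
      have "ln (real n) \<le> (m1 / 22) * (real n * p n)"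
        using lnb np unfolding \<epsilon>_def by (smt (verit) min.cobounded2 mult_right_mono)
      thus ?thesis unfolding m1_def by (simp add: field_simps)
    qed
    have th: "\<theta>s n i - \<theta>s n j \<le> K" if "i < n" "j < n" for i j
      using theta_in[of n] that kappa_bdd[of n] unfolding Theta_def by force
    have s0: "(\<Sum>i<n. \<theta>s n i) = 0" using theta_in[of n] unfolding Theta_def by auto
    show ?case using main_fixed[OF n2 L_pos pn K th s0 c1 c2] n2 by simp
  qed
  thus ?thesis by blast
qed

end
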